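(* There exist absolute constants $c,C>0$ such that the following holds. Let $r\ge1$ with $r\le c\sqrt{\log n}$, and let $P_1,\dots,P_n\colon\mathbb{F}_2^m\to\mathbb{F}_2$ be functions with $\operatorname{rank}_1(P_i)\le r$ for all $i$. Let $\mathcal{P}$ be the distribution of $(P_1(X),\dots,P_n(X))$ for $X$ uniform on $\mathbb{F}_2^m$. Then \[ \|\mathcal{P}-\mathrm{Ber}(1/3)^{\otimes n}\|_{\mathtt{TV}}\ \ge\ 1-C\,\frac{2^{r/2}}{n^{1/(r+1)}}. \]
   Context: Logarithms are base 2. $\operatorname{rank}_1(P)$ is the smallest positive integer $k$ with $P=\Gamma(L_1,\dots,L_k)$ for polynomials $L_j$ of degree at most $1$ and some $\Gamma\colon\mathbb{F}_2^k\to\mathbb{F}_2$. Total variation distance: $\frac12\sum_x|\mathcal{D}_1(x)-\mathcal{D}_2(x)|$. *)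

theory Defs
  imports "HOL-Analysis.Analysis" "HOL-Library.Z2" "HOL-Library.FuncSet"
begin

text \<open>The vector space F_2^m, realised as extensional functions on the index set {0..<m}.\<close>
definition cube :: "nat \<Rightarrow> (nat \<Rightarrow> bit) set" where
  "cube m = {0..<m} \<rightarrow>\<^sub>E (UNIV :: bit set)"

definition affine_fn :: "nat \<Rightarrow> ((nat \<Rightarrow> bit) \<Rightarrow> bit) \<Rightarrow> bool" where
  "affine_fn m L \<longleftrightarrow> (\<exists>(a :: nat \<Rightarrow> bit) (b :: bit).
      \<forall>x \<in> cube m. L x = b + (\<Sum>i<m. a i * x i))"

definition rank1 :: "nat \<Rightarrow> ((nat \<Rightarrow> bit) \<Rightarrow> bit) \<Rightarrow> nat" where
  "rank1 m P = (LEAST k. 0 < k \<and>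
     (\<exists>(L :: nat \<Rightarrow> (nat \<Rightarrow> bit) \<Rightarrow> bit) (\<Gamma> :: (nat \<Rightarrow> bit) \<Rightarrow> bit).
        (\<forall>j<k. affine_fn m (L j)) \<and>
        (\<forall>x \<in> cube m. P x = \<Gamma> (\<lambda>j\<in>{0..<k}. L j x))))"

definition push_dist :: "nat \<Rightarrow> nat \<Rightarrow> (nat \<Rightarrow> (nat \<Rightarrow> bit) \<Rightarrow> bit) \<Rightarrow> (nat \<Rightarrow> bit) \<Rightarrow> real" where
  "push_dist m n P y =
     real (card {x \<in> cube m. (\<lambda>i\<in>{0..<n}. P i x) = y}) / 2 ^ m"

definition ber_prod :: "real \<Rightarrow> nat \<Rightarrow> (nat \<Rightarrow> bit) \<Rightarrow> real" where
  "ber_prod p n y = (\<Prod>i<n. if y i = 1 then p else 1 - p)"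

definition tv_dist :: "nat \<Rightarrow> ((nat \<Rightarrow> bit) \<Rightarrow> real) \<Rightarrow> ((nat \<Rightarrow> bit) \<Rightarrow> real) \<Rightarrow> real" where
  "tv_dist n D1 D2 = (1/2) * (\<Sum>y \<in> cube n. \<bar>D1 y - D2 y\<bar>)"

end

theory Submission
  imports Defs
begin


declare add_bit_eq_xor[simp del] mult_bit_eq_and[simp del]

lemma bit_add_self[simp]: "(x::bit) + x = 0"
  by (cases x) auto

lemma bit_cases3: "(x::bit) = 0 \<or> x = 1" by (cases x) auto

lemma bit_add_cancel: "(a::bit) + b + c + b + c = a"
  by (metis add.assoc add.commute add_0_right bit_add_self)

lemma bit_sum0_iff: "(a::bit) + b = 0 \<longleftrightarrow> a = b"
  by (cases a; cases b; simp)

lemma bit_neq: "(a::bit) \<noteq> b \<Longrightarrow> a = b + 1"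
  by (cases a; cases b; simp)

lemma bit_aff3: "(b::bit) + (x + y + z) = (b + x) + (b + y) + (b + z)"
  by (cases b; cases x; cases y; cases z; simp)

lemma bit_aab: "(a::bit) + a + b = b"
  by (cases a; cases b; simp)

lemma bit_add11: "(a::bit) + 1 + 1 = a"
  by (cases a; simp)

lemma bit_cancel_r: "(a::bit) + b = b \<Longrightarrow> a = 0"
  by (cases a; cases b; simp)

lemma bit_swap4: "((a::bit) + 1) + (b + 1) = a + b"
  by (cases a; cases b; simp)

lemma bit_add_eq_iff: "(a::bit) + b = c \<longleftrightarrow> a = c + b"
  by (cases a; cases b; cases c; simp)

definition add3 :: "nat \<Rightarrow> (nat \<Rightarrow> bit) \<Rightarrow> (nat \<Rightarrow> bit) \<Rightarrow> (nat \<Rightarrow> bit) \<Rightarrow> (nat \<Rightarrow> bit)" where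
  "add3 m x y z = (\<lambda>i\<in>{0..<m}. x i + y i + z i)"

definition closed3 :: "nat \<Rightarrow> (nat \<Rightarrow> bit) set \<Rightarrow> bool" where
  "closed3 m \<Omega> \<longleftrightarrow> \<Omega> \<subseteq> cube m \<and> (\<forall>x\<in>\<Omega>. \<forall>y\<in>\<Omega>. \<forall>z\<in>\<Omega>. add3 m x y z \<in> \<Omega>)"

definition h3 :: "nat \<Rightarrow> (nat \<Rightarrow> bit) set \<Rightarrow> ((nat \<Rightarrow> bit) \<Rightarrow> bit) \<Rightarrow> bool" where
  "h3 m \<Omega> l \<longleftrightarrow> (\<forall>x\<in>\<Omega>. \<forall>y\<in>\<Omega>. \<forall>z\<in>\<Omega>. l (add3 m x y z) = l x + l y + l z)"

definition free :: "(nat \<Rightarrow> bit) set \<Rightarrow> 'j set \<Rightarrow> ('j \<Rightarrow> (nat \<Rightarrow> bit) \<Rightarrow> bit) \<Rightarrow> bool" where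
  "free \<Omega> D L \<longleftrightarrow> (\<forall>T\<subseteq>D. T \<noteq> {} \<longrightarrow> \<not> (\<exists>c. \<forall>x\<in>\<Omega>. (\<Sum>j\<in>T. L j x) = c))"

lemma add3_cube: "add3 m x y z \<in> cube m"
  by (auto simp: add3_def cube_def)

lemma closed3_cube: "closed3 m (cube m)"
  unfolding closed3_def using add3_cube by blast

lemma add3_invol: assumes z: "z \<in> cube m" shows "add3 m (add3 m z x y) x y = z"
proof (rule ext)
  fix i
  show "add3 m (add3 m z x y) x y i = z i"
  proof (cases "i < m")
    case True
    hence "add3 m (add3 m z x y) x y i = (z i + x i + y i) + x i + y i" by (simp add: add3_def)
    also have "\<dots> = z i" by (rule bit_add_cancel)
    finally show ?thesis .
  next
    case False
    have "z i = undefined" using z False unfolding cube_def by (intro PiE_arb[of z "{0..<m}"]) auto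
    thus ?thesis using False by (simp add: add3_def)
  qed
qed

lemma affine_h3:
  assumes "affine_fn m L" "\<Omega> \<subseteq> cube m" shows "h3 m \<Omega> L"
proof -
  obtain a b where ab: "\<forall>x\<in>cube m. L x = b + (\<Sum>i<m. a i * x i)"
    using assms(1) unfolding affine_fn_def by blast
  show ?thesis unfolding h3_def
  proof (intro ballI)
    fix x y z assume "x \<in> \<Omega>" "y \<in> \<Omega>" "z \<in> \<Omega>"
    hence c: "x \<in> cube m" "y \<in> cube m" "z \<in> cube m" using assms(2) by auto
    have "(\<Sum>i<m. a i * add3 m x y z i) = (\<Sum>i<m. a i * x i + a i * y i + a i * z i)"
      by (rule sum.cong) (auto simp: add3_def distrib_left)
    also have "\<dots> = (\<Sum>i<m. a i * x i) + (\<Sum>i<m. a i * y i) + (\<Sum>i<m. a i * z i)"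
      by (simp add: sum.distrib)
    finally have e: "(\<Sum>i<m. a i * add3 m x y z i) = (\<Sum>i<m. a i * x i) + (\<Sum>i<m. a i * y i) + (\<Sum>i<m. a i * z i)" .
    have "L (add3 m x y z) = b + ((\<Sum>i<m. a i * x i) + (\<Sum>i<m. a i * y i) + (\<Sum>i<m. a i * z i))"
      using ab add3_cube e by metis
    also have "\<dots> = (b + (\<Sum>i<m. a i * x i)) + (b + (\<Sum>i<m. a i * y i)) + (b + (\<Sum>i<m. a i * z i))"
      by (rule bit_aff3)
    finally show "L (add3 m x y z) = L x + L y + L z" using ab c by metis
  qed
qed

lemma h3_sum:
  assumes "\<forall>j\<in>T. h3 m \<Omega> (L j)"
  shows "h3 m \<Omega> (\<lambda>x. \<Sum>j\<in>T. L j x)"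
  unfolding h3_def
proof (intro ballI)
  fix x y z assume "x \<in> \<Omega>" "y \<in> \<Omega>" "z \<in> \<Omega>"
  hence "\<forall>j\<in>T. L j (add3 m x y z) = L j x + L j y + L j z" using assms unfolding h3_def by blast
  hence "(\<Sum>j\<in>T. L j (add3 m x y z)) = (\<Sum>j\<in>T. L j x + L j y + L j z)" by simp
  thus "(\<Sum>j\<in>T. L j (add3 m x y z)) = (\<Sum>j\<in>T. L j x) + (\<Sum>j\<in>T. L j y) + (\<Sum>j\<in>T. L j z)"
    by (simp add: sum.distrib)
qed

lemma h3_subset: "h3 m \<Omega> l \<Longrightarrow> \<Omega>' \<subseteq> \<Omega> \<Longrightarrow> h3 m \<Omega>' l"
  unfolding h3_def by blast

lemma closed3_fiber:
  assumes "closed3 m \<Omega>" "\<forall>j\<in>D. h3 m \<Omega> (L j)"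
  shows "closed3 m {x\<in>\<Omega>. \<forall>j\<in>D. L j x = a j}"
  unfolding closed3_def
proof (intro conjI ballI)
  show "{x \<in> \<Omega>. \<forall>j\<in>D. L j x = a j} \<subseteq> cube m" using assms(1) unfolding closed3_def by blast
  fix x y z assume xyz: "x \<in> {x \<in> \<Omega>. \<forall>j\<in>D. L j x = a j}" "y \<in> {x \<in> \<Omega>. \<forall>j\<in>D. L j x = a j}"
    "z \<in> {x \<in> \<Omega>. \<forall>j\<in>D. L j x = a j}"
  have "add3 m x y z \<in> \<Omega>" using assms(1) xyz unfolding closed3_def by blast
  moreover have "\<forall>j\<in>D. L j (add3 m x y z) = a j"
  proof
    fix j assume j: "j \<in> D"
    have "L j (add3 m x y z) = L j x + L j y + L j z" using assms(2) j xyz unfolding h3_def by blast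
    also have "\<dots> = a j + a j + a j" using xyz j by simp
    also have "\<dots> = a j" by (metis add_0_left bit_add_self)
    finally show "L j (add3 m x y z) = a j" .
  qed
  ultimately show "add3 m x y z \<in> {x \<in> \<Omega>. \<forall>j\<in>D. L j x = a j}" by blast
qed

lemma closed3_fiber1:
  assumes "closed3 m \<Omega>" "h3 m \<Omega> l"
  shows "closed3 m {x\<in>\<Omega>. l x = c}"
proof -
  have "{x\<in>\<Omega>. l x = c} = {x\<in>\<Omega>. \<forall>j\<in>{()}. (\<lambda>_. l) j x = (\<lambda>_. c) j}" by simp
  thus ?thesis using closed3_fiber[of m \<Omega> "{()}" "\<lambda>_. l" "\<lambda>_. c"] assms by simp
qed

lemma balanced:
  assumes cl: "closed3 m \<Omega>" and h: "h3 m \<Omega> l" and fin: "finite \<Omega>"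
    and x0: "x0 \<in> \<Omega>" "l x0 = 0" and x1: "x1 \<in> \<Omega>" "l x1 = 1"
  shows "card {x\<in>\<Omega>. l x = 0} = card {x\<in>\<Omega>. l x = 1}"
proof -
  have sub: "\<Omega> \<subseteq> cube m" using cl by (simp add: closed3_def)
  let ?f = "\<lambda>z. add3 m z x0 x1"
  have m: "\<And>z. z \<in> \<Omega> \<Longrightarrow> ?f z \<in> \<Omega> \<and> l (?f z) = l z + 1"
  proof -
    fix z assume z: "z \<in> \<Omega>"
    have "?f z \<in> \<Omega>" using cl z x0 x1 unfolding closed3_def by blast
    moreover have "l (?f z) = l z + l x0 + l x1" using h z x0 x1 unfolding h3_def by blast
    ultimately show "?f z \<in> \<Omega> \<and> l (?f z) = l z + 1" using x0 x1 by simp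
  qed
  have "bij_betw ?f {x\<in>\<Omega>. l x = 0} {x\<in>\<Omega>. l x = 1}"
  proof (rule bij_betw_byWitness[where f' = ?f])
    show "\<forall>a\<in>{x \<in> \<Omega>. l x = 0}. ?f (?f a) = a" using sub add3_invol by blast
    show "\<forall>a\<in>{x \<in> \<Omega>. l x = 1}. ?f (?f a) = a" using sub add3_invol by blast
    show "?f ` {x \<in> \<Omega>. l x = 0} \<subseteq> {x \<in> \<Omega>. l x = 1}"
      using m by auto
    show "?f ` {x \<in> \<Omega>. l x = 1} \<subseteq> {x \<in> \<Omega>. l x = 0}"
      using m by auto
  qed
  thus ?thesis by (rule bij_betw_same_card)
qed

lemma card_split_bit:
  assumes "finite \<Omega>"
  shows "card \<Omega> = card {x\<in>\<Omega>. l x = (0::bit)} + card {x\<in>\<Omega>. l x = 1}"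
proof -
  have "\<Omega> = {x\<in>\<Omega>. l x = 0} \<union> {x\<in>\<Omega>. l x = 1}" using bit_cases3 by blast
  moreover have "{x\<in>\<Omega>. l x = 0} \<inter> {x\<in>\<Omega>. l x = 1} = {}" by auto
  ultimately show ?thesis using assms card_Un_disjoint[of "{x\<in>\<Omega>. l x = 0}" "{x\<in>\<Omega>. l x = 1}"] by simp
qed

lemma balanced2:
  assumes cl: "closed3 m \<Omega>" and h: "h3 m \<Omega> l" and fin: "finite \<Omega>"
    and x0: "x0 \<in> \<Omega>" and x1: "x1 \<in> \<Omega>" "l x1 \<noteq> l x0"
  shows "2 * card {x\<in>\<Omega>. l x = c} = card \<Omega>"
proof -
  obtain y0 y1 where y: "y0 \<in> \<Omega>" "l y0 = 0" "y1 \<in> \<Omega>" "l y1 = 1"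
    using x0 x1 bit_cases3[of "l x0"] bit_cases3[of "l x1"] by auto
  have e: "card {x\<in>\<Omega>. l x = 0} = card {x\<in>\<Omega>. l x = 1}"
    using balanced[OF cl h fin y] .
  have "card \<Omega> = card {x\<in>\<Omega>. l x = 0} + card {x\<in>\<Omega>. l x = 1}"
    using card_split_bit[OF fin] .
  thus ?thesis using e bit_cases3[of c] by auto
qed


lemma free_nonconst:
  assumes "free \<Omega> D L" "d \<in> D" "x0 \<in> \<Omega>"
  shows "\<exists>x1\<in>\<Omega>. L d x1 \<noteq> L d x0"
proof (rule ccontr)
  assume "\<not> ?thesis"
  hence "\<forall>x\<in>\<Omega>. (\<Sum>j\<in>{d}. L j x) = L d x0" by auto
  thus False using assms(1,2) unfolding free_def by blast
qed

lemma free_fiber: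
  assumes cl: "closed3 m \<Omega>" and h: "\<forall>j\<in>insert d D. h3 m \<Omega> (L j)"
    and fr: "free \<Omega> (insert d D) L" and dD: "d \<notin> D" and finD: "finite D"
    and x0: "x0 \<in> \<Omega>" and x1: "x1 \<in> \<Omega>" "L d x1 \<noteq> L d x0"
  shows "free {x\<in>\<Omega>. L d x = c} D L"
  unfolding free_def
proof (intro allI impI notI)
  fix T assume T: "T \<subseteq> D" "T \<noteq> {}"
  assume "\<exists>c0. \<forall>x\<in>{x\<in>\<Omega>. L d x = c}. (\<Sum>j\<in>T. L j x) = c0"
  then obtain c0 where c0: "\<forall>x\<in>{x\<in>\<Omega>. L d x = c}. (\<Sum>j\<in>T. L j x) = c0" by blast
  define S where "S = (\<lambda>x. \<Sum>j\<in>T. L j x)"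
  have hS: "h3 m \<Omega> S" unfolding S_def using h T by (intro h3_sum) blast
  obtain z w where zw: "z \<in> \<Omega>" "L d z = c" "w \<in> \<Omega>" "L d w = c + 1"
  proof (cases "L d x0 = c")
    case True
    hence "L d x1 = c + 1" using x1 bit_neq by simp
    thus ?thesis using that[of x0 x1] x0 x1 True by blast
  next
    case False
    hence a: "L d x0 = c + 1" using bit_neq by blast
    hence "L d x1 \<noteq> c + 1" using x1 by simp
    hence "L d x1 = c + 1 + 1" using bit_neq by blast
    hence "L d x1 = c" by (simp add: bit_add11)
    thus ?thesis using that[of x1 x0] x0 x1 a by blast
  qed
  have Sz: "S z = c0" using c0 zw unfolding S_def by blast
  have other: "S x = S w" if x: "x \<in> \<Omega>" "L d x = c + 1" for x
  proof -
    have in1: "add3 m x w z \<in> \<Omega>" using cl x zw unfolding closed3_def by blast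
    have "L d (add3 m x w z) = L d x + L d w + L d z" using h x zw unfolding h3_def by blast
    also have "\<dots> = c" using x zw by (simp add: bit_aab)
    finally have "L d (add3 m x w z) = c" .
    hence "S (add3 m x w z) = c0" using c0 in1 unfolding S_def by blast
    moreover have "S (add3 m x w z) = S x + S w + S z" using hS x zw unfolding h3_def by blast
    ultimately have "S x + S w + c0 = c0" using Sz by simp
    hence "S x + S w = 0" by (rule bit_cancel_r)
    thus ?thesis by (simp add: bit_sum0_iff)
  qed
  have split: "\<forall>x\<in>\<Omega>. L d x = c \<or> L d x = c + 1" using bit_neq by blast
  show False
  proof (cases "S w = c0")
    case True
    hence "\<forall>x\<in>\<Omega>. (\<Sum>j\<in>T. L j x) = c0" using split other c0 unfolding S_def by fastforce
    thus False using fr T unfolding free_def by blast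
  next
    case False
    hence Sw: "S w = c0 + 1" using bit_neq by blast
    have "\<forall>x\<in>\<Omega>. (\<Sum>j\<in>insert d T. L j x) = c + c0"
    proof
      fix x assume x: "x \<in> \<Omega>"
      have fT: "finite T" using T finD finite_subset by blast
      have dT: "d \<notin> T" using T dD by blast
      have e: "(\<Sum>j\<in>insert d T. L j x) = L d x + S x" using fT dT unfolding S_def by simp
      show "(\<Sum>j\<in>insert d T. L j x) = c + c0"
      proof (cases "L d x = c")
        case True
        thus ?thesis using e c0 x unfolding S_def by simp
      next
        case False
        hence "L d x = c + 1" using split x by blast
        moreover have "S x = c0 + 1" using other[OF x] Sw \<open>L d x = c + 1\<close> by simp
        ultimately have "L d x + S x = c + c0" by (simp add: bit_swap4)
        thus ?thesis using e by simp
      qed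
    qed
    moreover have "insert d T \<subseteq> insert d D" using T by blast
    ultimately show False using fr unfolding free_def by blast
  qed
qed

lemma unif:
  assumes "finite D"
  shows "closed3 m \<Omega> \<Longrightarrow> finite \<Omega> \<Longrightarrow> \<Omega> \<noteq> {} \<Longrightarrow> \<forall>j\<in>D. h3 m \<Omega> (L j) \<Longrightarrow> free \<Omega> D L \<Longrightarrow>
    card {x\<in>\<Omega>. \<forall>j\<in>D. L j x = a j} * 2 ^ card D = card \<Omega>"
  using assms
proof (induction D arbitrary: \<Omega> rule: finite_induct)
  case empty
  then show ?case by simp
next
  case (insert d D)
  obtain x0 where x0: "x0 \<in> \<Omega>" using insert.prems(3) by blast
  obtain x1 where x1: "x1 \<in> \<Omega>" "L d x1 \<noteq> L d x0"
    using free_nonconst[OF insert.prems(5) _ x0] by blast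
  define \<Omega>' where "\<Omega>' = {x\<in>\<Omega>. L d x = a d}"
  have hd: "h3 m \<Omega> (L d)" using insert.prems(4) by blast
  have c2: "2 * card \<Omega>' = card \<Omega>"
    unfolding \<Omega>'_def using balanced2[OF insert.prems(1) hd insert.prems(2) x0 x1] .
  have cl': "closed3 m \<Omega>'" unfolding \<Omega>'_def using closed3_fiber1[OF insert.prems(1) hd] .
  have fin': "finite \<Omega>'" unfolding \<Omega>'_def using insert.prems(2) by simp
  have "card \<Omega> > 0" using x0 insert.prems(2) card_gt_0_iff by blast
  hence "card \<Omega>' \<noteq> 0" using c2 by linarith
  hence ne': "\<Omega>' \<noteq> {}" by auto
  have h': "\<forall>j\<in>D. h3 m \<Omega>' (L j)" using insert.prems(4) h3_subset[of m \<Omega> _ \<Omega>'] unfolding \<Omega>'_def by blast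
  have fr': "free \<Omega>' D L" unfolding \<Omega>'_def
    using free_fiber[OF insert.prems(1) insert.prems(4) insert.prems(5) insert.hyps(2) insert.hyps(1) x0 x1] .
  have IH: "card {x\<in>\<Omega>'. \<forall>j\<in>D. L j x = a j} * 2 ^ card D = card \<Omega>'"
    using insert.IH[OF cl' fin' ne' h' fr'] by blast
  have eq: "{x\<in>\<Omega>. \<forall>j\<in>insert d D. L j x = a j} = {x\<in>\<Omega>'. \<forall>j\<in>D. L j x = a j}"
    unfolding \<Omega>'_def by auto
  have "card (insert d D) = Suc (card D)" using insert.hyps by simp
  thus ?case using eq IH c2 by (simp add: mult.commute mult.left_commute)
qed


definition rep :: "nat \<Rightarrow> (nat\<Rightarrow>bit) set \<Rightarrow> ((nat\<Rightarrow>bit)\<Rightarrow>bit) \<Rightarrow> nat set \<Rightarrow> (nat \<Rightarrow> (nat\<Rightarrow>bit)\<Rightarrow>bit) \<Rightarrow> ((nat\<Rightarrow>bit)\<Rightarrow>bit) \<Rightarrow> bool" where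
  "rep m \<Omega> P D L \<Gamma> \<longleftrightarrow> finite D \<and> (\<forall>j\<in>D. affine_fn m (L j)) \<and> (\<forall>x\<in>\<Omega>. P x = \<Gamma> (\<lambda>j\<in>D. L j x))"

lemma bit_eq_sum: "(c::bit) = a + b \<Longrightarrow> c + b = a"
  by (cases a; cases b; cases c; simp)

lemma rep_drop:
  assumes r: "rep m \<Omega> P D L \<Gamma>" and T: "T \<subseteq> D" "T \<noteq> {}" and c: "\<forall>x\<in>\<Omega>. (\<Sum>j\<in>T. L j x) = c"
  shows "\<exists>D' \<Gamma>'. D' \<subseteq> D \<and> card D' < card D \<and> rep m \<Omega> P D' L \<Gamma>'"
proof -
  obtain j0 where j0: "j0 \<in> T" using T by blast
  have finD: "finite D" using r unfolding rep_def by blast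
  have finT: "finite T" using T finD finite_subset by blast
  define D' where "D' = D - {j0}"
  define \<Gamma>' where "\<Gamma>' = (\<lambda>v. \<Gamma> (\<lambda>j\<in>D. if j = j0 then c + (\<Sum>k\<in>T-{j0}. v k) else v j))"
  have "\<forall>x\<in>\<Omega>. P x = \<Gamma>' (\<lambda>j\<in>D'. L j x)"
  proof
    fix x assume x: "x \<in> \<Omega>"
    have s: "(\<Sum>k\<in>T-{j0}. (\<lambda>j\<in>D'. L j x) k) = (\<Sum>k\<in>T-{j0}. L k x)"
      by (rule sum.cong) (use T in \<open>auto simp: D'_def\<close>)
    have cc: "c = L j0 x + (\<Sum>k\<in>T-{j0}. L k x)"
      using c x sum.remove[OF finT j0, of "\<lambda>k. L k x"] by simp
    have "(\<lambda>j\<in>D. if j = j0 then c + (\<Sum>k\<in>T-{j0}. (\<lambda>j\<in>D'. L j x) k) else (\<lambda>j\<in>D'. L j x) j)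
        = (\<lambda>j\<in>D. L j x)"
    proof (rule ext)
      fix j
      show "(\<lambda>j\<in>D. if j = j0 then c + (\<Sum>k\<in>T-{j0}. (\<lambda>j\<in>D'. L j x) k) else (\<lambda>j\<in>D'. L j x) j) j
          = (\<lambda>j\<in>D. L j x) j"
      proof (cases "j \<in> D")
        case True
        show ?thesis
        proof (cases "j = j0")
          case True
          thus ?thesis using \<open>j \<in> D\<close> s bit_eq_sum[OF cc] by simp
        next
          case False
          hence "j \<in> D'" using \<open>j \<in> D\<close> unfolding D'_def by blast
          thus ?thesis using \<open>j \<in> D\<close> False by simp
        qed
      next
        case False
        thus ?thesis by simp
      qed
    qed
    thus "P x = \<Gamma>' (\<lambda>j\<in>D'. L j x)" using r x unfolding rep_def \<Gamma>'_def by simp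
  qed
  moreover have "D' \<subseteq> D" "card D' < card D"
    using j0 T finD unfolding D'_def by (auto intro: psubset_card_mono)
  moreover have "finite D'" using finD unfolding D'_def by blast
  moreover have "\<forall>j\<in>D'. affine_fn m (L j)" using r \<open>D' \<subseteq> D\<close> unfolding rep_def by blast
  ultimately have "D' \<subseteq> D \<and> card D' < card D \<and> rep m \<Omega> P D' L \<Gamma>'" unfolding rep_def by blast
  thus ?thesis by blast
qed

lemma rep_free:
  shows "rep m \<Omega> P D L \<Gamma> \<Longrightarrow> \<exists>D' \<Gamma>'. D' \<subseteq> D \<and> rep m \<Omega> P D' L \<Gamma>' \<and> free \<Omega> D' L"
proof (induction "card D" arbitrary: D \<Gamma> rule: less_induct)
  case less
  show ?case
  proof (cases "free \<Omega> D L")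
    case True
    thus ?thesis using less.prems by blast
  next
    case False
    then obtain T c where T: "T \<subseteq> D" "T \<noteq> {}" "\<forall>x\<in>\<Omega>. (\<Sum>j\<in>T. L j x) = c"
      unfolding free_def by blast
    obtain D' \<Gamma>' where D': "D' \<subseteq> D" "card D' < card D" "rep m \<Omega> P D' L \<Gamma>'"
      using rep_drop[OF less.prems T] by blast
    obtain D'' \<Gamma>'' where "D'' \<subseteq> D'" "rep m \<Omega> P D'' L \<Gamma>''" "free \<Omega> D'' L"
      using less.hyps[OF D'(2) D'(3)] by blast
    thus ?thesis using D'(1) by blast
  qed
qed


lemma e2_helper:
  fixes a b c d p q :: real
  shows "(a-b)^2 = a^2 + b^2 - 2*(a*b) \<Longrightarrow> (c-d)^2 = c^2+d^2-2*(c*d) \<Longrightarrow> a^2 = p \<Longrightarrow> b^2 = q \<Longrightarrow> c^2 = 1 - p \<Longrightarrow> d^2 = 1 - q \<Longrightarrow> a * b + c * d = 1 - ((a - b)^2 + (c - d)^2) / 2"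
  by (simp add: field_simps)

lemma lin_helper:
  fixes S T X Y P :: real
  shows "S = T \<Longrightarrow> T = 1 - (X + Y) / 2 \<Longrightarrow> P \<le> 4 * X \<Longrightarrow> 0 \<le> Y \<Longrightarrow> S \<le> 1 - P / 8"
  by argo

lemma bc_bound:
  fixes p q :: real
  assumes p: "0 \<le> p" "p \<le> 1" and q: "0 \<le> q" "q \<le> 1"
  shows "sqrt (p * q) + sqrt ((1 - p) * (1 - q)) \<le> 1 - (p - q)^2 / 8"
proof -
  define a b c d where "a = sqrt p" "b = sqrt q" "c = sqrt (1 - p)" "d = sqrt (1 - q)"
  have a2: "a^2 = p" "b^2 = q" "c^2 = 1 - p" "d^2 = 1 - q" unfolding a_b_c_d_def using assms by simp_all
  have nn: "a \<ge> 0" "b \<ge> 0" "c \<ge> 0" "d \<ge> 0" unfolding a_b_c_d_def using assms by simp_all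
  have a1: "a \<le> 1" "b \<le> 1" unfolding a_b_c_d_def by (simp_all add: p q)
  have e1: "sqrt (p * q) + sqrt ((1 - p) * (1 - q)) = a * b + c * d"
    unfolding a_b_c_d_def by (simp add: real_sqrt_mult)
  have "(a-b)^2 = a^2 + b^2 - 2*(a*b)" "(c-d)^2 = c^2+d^2-2*(c*d)" by (simp_all add: power2_diff mult.assoc)
  hence e2: "a * b + c * d = 1 - ((a - b)^2 + (c - d)^2) / 2"
    using a2 e2_helper by blast
  have "(a-b)*(a+b) = p - q" using a2 by (simp add: algebra_simps power2_eq_square)
  hence e3: "(p - q)^2 = (a - b)^2 * (a + b)^2" by (metis power_mult_distrib)
  have "(a + b)^2 \<le> 4" using nn a1 power_mono[of "a+b" 2 2] by simp
  hence "(a - b)^2 * (a + b)^2 \<le> (a - b)^2 * 4" by (intro mult_left_mono) simp_all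
  hence "(p - q)^2 \<le> 4 * (a - b)^2" using e3 by simp
  moreover have "(c - d)^2 \<ge> 0" by simp
  ultimately show ?thesis using e1 e2 lin_helper by blast
qed

lemma not_three_pow2: "3 * (c::nat) \<noteq> 2 ^ k"
proof -
  have "(2::nat)^k mod 3 = 1 \<or> (2::nat)^k mod 3 = 2"
  proof (induction k)
    case 0 thus ?case by simp
  next
    case (Suc k)
    have "(2::nat)^(Suc k) mod 3 = (2 * (2^k mod 3)) mod 3" by (simp add: mod_mult_right_eq)
    thus ?case using Suc by auto
  qed
  moreover have "3 * c \<noteq> 2 ^ k"
  proof
    assume h: "3 * c = 2 ^ k"
    have "(3 * c) mod 3 = 0" by simp
    hence "(2::nat) ^ k mod 3 = 0" using h by simp
    thus False using calculation by simp
  qed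
  ultimately show ?thesis by blast
qed

lemma coord_bound:
  fixes c0 c1 k s :: nat
  assumes "k \<le> s" "c0 + c1 = 2 ^ k"
  shows "sqrt (real c1 / 2 ^ k * (1/3)) + sqrt (real c0 / 2 ^ k * (1 - 1/3)) \<le> 1 - 1 / (72 * 4 ^ s)"
proof -
  define p where "p = real c1 / 2 ^ k"
  have "real c0 + real c1 = 2 ^ k" using assms(2) by (metis of_nat_add of_nat_numeral of_nat_power)
  hence eq: "real c0 = 2 ^ k - real c1" by linarith
  have "1 - p = (2 ^ k - real c1) / 2 ^ k" unfolding p_def by (simp add: diff_divide_distrib)
  hence p1: "1 - p = real c0 / 2 ^ k" by (simp only: eq[symmetric])
  have "0 \<le> real c0 / 2 ^ k" by simp
  hence p01: "p \<le> 1" using p1 by linarith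
  have p00: "0 \<le> p" unfolding p_def by simp
  note p0 = p00 p01
  have B: "sqrt (p * (1/3)) + sqrt ((1 - p) * (1 - 1/3)) \<le> 1 - (p - 1/3)^2 / 8"
    using bc_bound[OF p0, of "1/3"] by simp
  have ne: "\<bar>3 * int c1 - 2 ^ k\<bar> \<ge> 1"
  proof -
    have "3 * int c1 \<noteq> 2 ^ k" using not_three_pow2[of c1 k] by (metis of_nat_eq_iff of_nat_mult of_nat_numeral of_nat_power)
    thus ?thesis by linarith
  qed
  define z where "z = real_of_int (3 * int c1 - 2 ^ k)"
  have z1: "\<bar>z\<bar> \<ge> 1" using ne unfolding z_def by linarith
  have "p - 1/3 = z / (3 * 2 ^ k)" unfolding p_def z_def by (simp add: field_simps)
  hence "\<bar>p - 1/3\<bar> = \<bar>z\<bar> / (3 * 2 ^ k)" by (simp add: abs_divide)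
  moreover have "1 / (3 * 2 ^ k) \<le> \<bar>z\<bar> / (3 * 2 ^ k)" using z1 by (intro divide_right_mono) auto
  ultimately have "\<bar>p - 1/3\<bar> \<ge> 1 / (3 * 2 ^ k)" by simp
  moreover have "1 / (3 * 2 ^ s) \<le> (1::real) / (3 * 2 ^ k)"
    using assms(1) by (simp add: frac_le power_increasing)
  ultimately have a: "\<bar>p - 1/3\<bar> \<ge> 1 / (3 * 2 ^ s)" by linarith
  have "(1 / (3 * 2 ^ s))^2 \<le> \<bar>p - 1/3\<bar>^2"
    using a by (intro power_mono) auto
  hence sq: "(1 / (3 * 2 ^ s))^2 \<le> (p - 1/3)^2" by simp
  have h4: "(4::real)^s = (2^s)^2" by (simp add: power_mult_distrib[symmetric] power2_eq_square)
  have "(1 / (3 * 2 ^ s :: real))^2 = 1 / (9 * (2^s)^2)" by (simp add: power_divide power_mult_distrib)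
  hence "(1 / (3 * 2 ^ s :: real))^2 = 1 / (9 * 4 ^ s)" by (simp only: h4)
  hence "1 / (9 * 4 ^ s) \<le> (p - 1/3)^2" using sq by simp
  hence "1 / (72 * 4 ^ s) \<le> (p - 1/3)^2 / 8" by simp
  hence fin: "sqrt (p * (1/3)) + sqrt ((1 - p) * (1 - 1/3)) \<le> 1 - 1 / (72 * 4 ^ s)" using B by linarith
  show ?thesis unfolding p_def[symmetric] p1[symmetric] using fin .
qed


definition cnt :: "(nat\<Rightarrow>bit) set \<Rightarrow> (nat \<Rightarrow> (nat\<Rightarrow>bit)\<Rightarrow>bit) \<Rightarrow> nat \<Rightarrow> (nat\<Rightarrow>bit) \<Rightarrow> nat" where
  "cnt \<Omega> P n y = card {x\<in>\<Omega>. (\<lambda>i\<in>{0..<n}. P i x) = y}"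

definition qb :: "bit \<Rightarrow> real" where "qb b = (if b = 1 then 1/3 else 1 - 1/3)"

definition BC :: "(nat\<Rightarrow>bit) set \<Rightarrow> (nat \<Rightarrow> (nat\<Rightarrow>bit)\<Rightarrow>bit) \<Rightarrow> nat \<Rightarrow> real" where
  "BC \<Omega> P n = (\<Sum>y\<in>cube n. sqrt (real (cnt \<Omega> P n y) / real (card \<Omega>) * ber_prod (1/3) n y))"

lemma ber_qb: "ber_prod (1/3) n y = (\<Prod>i\<in>{0..<n}. qb (y i))"
  unfolding ber_prod_def qb_def by (simp add: atLeast0LessThan)

lemma UNIV_bit: "(UNIV :: bit set) = {0, 1}"
  using bit_cases3 by blast

lemma finite_UNIV_bit[simp]: "finite (UNIV :: bit set)"
  by (simp add: UNIV_bit)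

lemma sum_bit: "(\<Sum>b\<in>(UNIV::bit set). f b) = f 0 + f 1"
  unfolding UNIV_bit by simp

lemma finite_cube: "finite (cube n)"
  unfolding cube_def by (intro finite_PiE) (auto simp: UNIV_bit)

lemma pat_cube: "(\<lambda>i\<in>{0..<n}. P i x) \<in> cube n"
  unfolding cube_def by simp

lemma card_fiber_sum:
  assumes "finite \<Omega>" "finite Y" "\<forall>x\<in>\<Omega>. f x \<in> Y"
  shows "card {x\<in>\<Omega>. \<Phi> (f x)} = (\<Sum>y\<in>{y\<in>Y. \<Phi> y}. card {x\<in>\<Omega>. f x = y})"
proof -
  have "card {x\<in>\<Omega>. \<Phi> (f x)} = (\<Sum>x\<in>{x\<in>\<Omega>. \<Phi> (f x)}. 1)" by simp
  also have "\<dots> = (\<Sum>y\<in>{y\<in>Y. \<Phi> y}. \<Sum>x\<in>{x. x \<in> {x\<in>\<Omega>. \<Phi> (f x)} \<and> f x = y}. 1)"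
    by (rule sum.group[symmetric]) (use assms in auto)
  also have "\<dots> = (\<Sum>y\<in>{y\<in>Y. \<Phi> y}. card {x\<in>\<Omega>. f x = y})"
  proof (rule sum.cong[OF refl])
    fix y assume "y \<in> {y\<in>Y. \<Phi> y}"
    hence "{x. x \<in> {x\<in>\<Omega>. \<Phi> (f x)} \<and> f x = y} = {x\<in>\<Omega>. f x = y}" by auto
    thus "(\<Sum>x\<in>{x. x \<in> {x\<in>\<Omega>. \<Phi> (f x)} \<and> f x = y}. 1) = card {x\<in>\<Omega>. f x = y}" by simp
  qed
  finally show ?thesis .
qed

lemma sqrt_sum_le:
  assumes "finite A" "\<forall>a\<in>A. f a \<ge> 0"
  shows "sqrt (\<Sum>a\<in>A. f a) \<le> (\<Sum>a\<in>A. sqrt (f a))"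
  using assms
proof (induction A rule: finite_induct)
  case empty thus ?case by simp
next
  case (insert a A)
  have "sqrt (\<Sum>a\<in>insert a A. f a) = sqrt (f a + (\<Sum>a\<in>A. f a))" using insert by simp
  also have "\<dots> \<le> sqrt (f a) + sqrt (\<Sum>a\<in>A. f a)"
    using insert by (intro sqrt_add_le_add_sqrt) (auto intro: sum_nonneg)
  also have "\<dots> \<le> sqrt (f a) + (\<Sum>a\<in>A. sqrt (f a))" using insert by simp
  also have "\<dots> = (\<Sum>a\<in>insert a A. sqrt (f a))" using insert by simp
  finally show ?case .
qed

lemma BC_empty: "BC {} P n = 0"
  unfolding BC_def by simp

lemma ber_nonneg: "ber_prod (1/3) n y \<ge> 0"
  unfolding ber_prod_def by (intro prod_nonneg) auto

lemma BC_nonneg: "BC \<Omega> P n \<ge> 0"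
  unfolding BC_def by (intro sum_nonneg) (simp add: ber_nonneg)

lemma BC_mix:
  assumes fin: "finite \<Omega>" and finA: "finite A" and g: "\<forall>x\<in>\<Omega>. g x \<in> A"
  shows "BC \<Omega> P n \<le> (\<Sum>a\<in>A. BC {x\<in>\<Omega>. g x = a} P n)"
proof -
  let ?Q = "\<lambda>y. ber_prod (1/3) n y"
  have Qnn: "?Q y \<ge> 0" for y unfolding ber_prod_def by (intro prod_nonneg) auto
  have key: "sqrt (real (cnt \<Omega> P n y) / real (card \<Omega>) * ?Q y)
      \<le> (\<Sum>a\<in>A. sqrt (real (cnt {x\<in>\<Omega>. g x = a} P n y) / real (card {x\<in>\<Omega>. g x = a}) * ?Q y))" for y
  proof -
    let ?Om = "{x\<in>\<Omega>. (\<lambda>i\<in>{0..<n}. P i x) = y}"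
    have c1: "card ?Om = (\<Sum>a\<in>{a\<in>A. True}. card {x\<in>?Om. g x = a})"
      using card_fiber_sum[of ?Om A g "\<lambda>_. True"] fin g finA by auto
    have c2: "{x\<in>?Om. g x = a} = {x\<in>{x\<in>\<Omega>. g x = a}. (\<lambda>i\<in>{0..<n}. P i x) = y}" for a by auto
    have ceq: "real (cnt \<Omega> P n y) = (\<Sum>a\<in>A. real (cnt {x\<in>\<Omega>. g x = a} P n y))"
      unfolding cnt_def using c1 c2 by simp
    have le: "real (cnt {x\<in>\<Omega>. g x = a} P n y) / real (card \<Omega>)
        \<le> real (cnt {x\<in>\<Omega>. g x = a} P n y) / real (card {x\<in>\<Omega>. g x = a})" for a
    proof (cases "cnt {x\<in>\<Omega>. g x = a} P n y = 0")
      case True thus ?thesis by simp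
    next
      case False
      hence "{x\<in>{x\<in>\<Omega>. g x = a}. (\<lambda>i\<in>{0..<n}. P i x) = y} \<noteq> {}" unfolding cnt_def by (metis card.empty)
      hence ne: "{x\<in>\<Omega>. g x = a} \<noteq> {}" by blast
      have "card {x\<in>\<Omega>. g x = a} > 0" using ne fin by (simp add: card_gt_0_iff)
      moreover have "card {x\<in>\<Omega>. g x = a} \<le> card \<Omega>" using fin by (intro card_mono) auto
      ultimately show ?thesis by (intro divide_left_mono) auto
    qed
    have "real (cnt \<Omega> P n y) / real (card \<Omega>) * ?Q y
        = (\<Sum>a\<in>A. real (cnt {x\<in>\<Omega>. g x = a} P n y) / real (card \<Omega>) * ?Q y)"
      unfolding ceq by (simp add: sum_divide_distrib sum_distrib_right)
    also have "\<dots> \<le> (\<Sum>a\<in>A. real (cnt {x\<in>\<Omega>. g x = a} P n y) / real (card {x\<in>\<Omega>. g x = a}) * ?Q y)"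
      by (intro sum_mono mult_right_mono le Qnn)
    finally have "sqrt (real (cnt \<Omega> P n y) / real (card \<Omega>) * ?Q y)
        \<le> sqrt (\<Sum>a\<in>A. real (cnt {x\<in>\<Omega>. g x = a} P n y) / real (card {x\<in>\<Omega>. g x = a}) * ?Q y)"
      by simp
    also have "\<dots> \<le> (\<Sum>a\<in>A. sqrt (real (cnt {x\<in>\<Omega>. g x = a} P n y) / real (card {x\<in>\<Omega>. g x = a}) * ?Q y))"
      using finA Qnn by (intro sqrt_sum_le) auto
    finally show ?thesis .
  qed
  have "BC \<Omega> P n \<le> (\<Sum>y\<in>cube n. \<Sum>a\<in>A. sqrt (real (cnt {x\<in>\<Omega>. g x = a} P n y) / real (card {x\<in>\<Omega>. g x = a}) * ?Q y))"
    unfolding BC_def by (intro sum_mono key)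
  also have "\<dots> = (\<Sum>a\<in>A. BC {x\<in>\<Omega>. g x = a} P n)"
    unfolding BC_def by (rule sum.swap)
  finally show ?thesis .
qed

lemma cs_sqrt:
  assumes "\<forall>y\<in>F. u y \<ge> 0" "\<forall>y\<in>F. v y \<ge> (0::real)"
  shows "(\<Sum>y\<in>F. sqrt (u y * v y)) \<le> sqrt (\<Sum>y\<in>F. u y) * sqrt (\<Sum>y\<in>F. v y)"
proof -
  have "(\<Sum>y\<in>F. sqrt (u y) * sqrt (v y))^2 \<le> (\<Sum>y\<in>F. (sqrt (u y))^2) * (\<Sum>y\<in>F. (sqrt (v y))^2)"
    by (rule Cauchy_Schwarz_ineq_sum)
  also have "\<dots> = (\<Sum>y\<in>F. u y) * (\<Sum>y\<in>F. v y)" using assms by simp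
  finally have "(\<Sum>y\<in>F. sqrt (u y) * sqrt (v y)) \<le> sqrt ((\<Sum>y\<in>F. u y) * (\<Sum>y\<in>F. v y))"
    by (rule real_le_rsqrt)
  thus ?thesis by (simp add: real_sqrt_mult)
qed

lemma Q_marg:
  assumes S: "S \<subseteq> {0..<n}" and z: "z \<in> S \<rightarrow>\<^sub>E (UNIV::bit set)"
  shows "(\<Sum>y\<in>{y\<in>cube n. restrict y S = z}. ber_prod (1/3) n y) = (\<Prod>i\<in>S. qb (z i))"
proof -
  define B where "B = (\<lambda>i. if i \<in> S then {z i} else (UNIV::bit set))"
  have setq: "{y\<in>cube n. restrict y S = z} = PiE {0..<n} B"
  proof (intro set_eqI iffI)
    fix y assume y: "y \<in> {y\<in>cube n. restrict y S = z}"
    hence "y \<in> PiE {0..<n} (\<lambda>_. UNIV)" unfolding cube_def by simp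
    moreover have "\<forall>i\<in>S. y i = z i"
    proof
      fix i assume "i \<in> S"
      hence "restrict y S i = y i" by simp
      moreover have "restrict y S = z" using y by blast
      ultimately show "y i = z i" by simp
    qed
    ultimately show "y \<in> PiE {0..<n} B" unfolding B_def by (auto simp: PiE_iff)
  next
    fix y assume y: "y \<in> PiE {0..<n} B"
    hence yc: "y \<in> cube n" unfolding cube_def by (auto simp: PiE_iff)
    have "restrict y S = z"
    proof (rule ext)
      fix i show "restrict y S i = z i"
      proof (cases "i \<in> S")
        case True
        hence "y i \<in> B i" using y S by (auto simp: PiE_iff)
        thus ?thesis using True unfolding B_def by simp
      next
        case False
        thus ?thesis using PiE_arb[OF z False] by simp
      qed
    qed
    thus "y \<in> {y\<in>cube n. restrict y S = z}" using yc by simp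
  qed
  have "(\<Sum>y\<in>PiE {0..<n} B. ber_prod (1/3) n y) = (\<Sum>y\<in>PiE {0..<n} B. \<Prod>i\<in>{0..<n}. qb (y i))"
    by (simp add: ber_qb)
  also have "\<dots> = (\<Prod>i\<in>{0..<n}. \<Sum>b\<in>B i. qb b)"
    by (rule prod_sum_PiE[symmetric]) (auto simp: B_def)
  also have "\<dots> = (\<Prod>i\<in>{0..<n}. if i \<in> S then qb (z i) else 1)"
    by (rule prod.cong[OF refl]) (auto simp: B_def sum_bit qb_def)
  also have "\<dots> = (\<Prod>i\<in>{0..<n} \<inter> S. qb (z i))"
    by (rule prod.inter_restrict[symmetric]) simp
  also have "{0..<n} \<inter> S = S" using S by blast
  finally show ?thesis using setq by simp
qed


lemma restrict_eq_iff:
  assumes z: "z \<in> S \<rightarrow>\<^sub>E (UNIV::bit set)"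
  shows "restrict y S = z \<longleftrightarrow> (\<forall>i\<in>S. y i = z i)"
proof
  assume "restrict y S = z"
  thus "\<forall>i\<in>S. y i = z i" by (metis restrict_apply')
next
  assume h: "\<forall>i\<in>S. y i = z i"
  show "restrict y S = z"
  proof (rule ext)
    fix i show "restrict y S i = z i"
    proof (cases "i \<in> S")
      case True thus ?thesis using h by simp
    next
      case False thus ?thesis using PiE_arb[OF z False] by simp
    qed
  qed
qed

lemma BC_proj:
  assumes fin: "finite \<Omega>" and S: "S \<subseteq> {0..<n}"
  shows "BC \<Omega> P n \<le> (\<Sum>z\<in>S \<rightarrow>\<^sub>E (UNIV::bit set).
      sqrt (real (card {x\<in>\<Omega>. \<forall>i\<in>S. P i x = z i}) / real (card \<Omega>) * (\<Prod>i\<in>S. qb (z i))))"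
proof -
  let ?Q = "\<lambda>y. ber_prod (1/3) n y"
  let ?u = "\<lambda>y. real (cnt \<Omega> P n y) / real (card \<Omega>)"
  let ?Z = "S \<rightarrow>\<^sub>E (UNIV::bit set)"
  have finZ: "finite ?Z" by (intro finite_PiE) (use S finite_subset in auto)
  have "BC \<Omega> P n = (\<Sum>z\<in>?Z. \<Sum>y\<in>{y. y \<in> cube n \<and> restrict y S = z}. sqrt (?u y * ?Q y))"
    unfolding BC_def by (rule sum.group[symmetric]) (auto simp: finite_cube finZ)
  also have "\<dots> \<le> (\<Sum>z\<in>?Z. sqrt (real (card {x\<in>\<Omega>. \<forall>i\<in>S. P i x = z i}) / real (card \<Omega>) * (\<Prod>i\<in>S. qb (z i))))"
  proof (rule sum_mono)
    fix z assume z: "z \<in> ?Z"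
    let ?F = "{y. y \<in> cube n \<and> restrict y S = z}"
    have "(\<Sum>y\<in>?F. sqrt (?u y * ?Q y)) \<le> sqrt (\<Sum>y\<in>?F. ?u y) * sqrt (\<Sum>y\<in>?F. ?Q y)"
      by (rule cs_sqrt) (auto simp: ber_nonneg)
    also have "(\<Sum>y\<in>?F. ?Q y) = (\<Prod>i\<in>S. qb (z i))"
      using Q_marg[OF S z] by simp
    also have "(\<Sum>y\<in>?F. ?u y) = real (card {x\<in>\<Omega>. \<forall>i\<in>S. P i x = z i}) / real (card \<Omega>)"
    proof -
      have "card {x\<in>\<Omega>. restrict (\<lambda>i\<in>{0..<n}. P i x) S = z}
          = (\<Sum>y\<in>{y\<in>cube n. restrict y S = z}. card {x\<in>\<Omega>. (\<lambda>i\<in>{0..<n}. P i x) = y})"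
        by (rule card_fiber_sum[OF fin finite_cube]) (intro ballI pat_cube)
      moreover have "{x\<in>\<Omega>. restrict (\<lambda>i\<in>{0..<n}. P i x) S = z} = {x\<in>\<Omega>. \<forall>i\<in>S. P i x = z i}"
      proof -
        have "restrict (\<lambda>i\<in>{0..<n}. P i x) S = z \<longleftrightarrow> (\<forall>i\<in>S. P i x = z i)" for x
          using restrict_eq_iff[OF z, of "\<lambda>i\<in>{0..<n}. P i x"] S by auto
        thus ?thesis by blast
      qed
      ultimately have "real (card {x\<in>\<Omega>. \<forall>i\<in>S. P i x = z i}) = (\<Sum>y\<in>?F. real (cnt \<Omega> P n y))"
        unfolding cnt_def by simp
      thus ?thesis by (simp add: sum_divide_distrib)
    qed
    finally show "(\<Sum>y\<in>?F. sqrt (?u y * ?Q y)) \<le> sqrt (real (card {x\<in>\<Omega>. \<forall>i\<in>S. P i x = z i}) / real (card \<Omega>) * (\<Prod>i\<in>S. qb (z i)))"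
      by (simp only: real_sqrt_mult[symmetric])
  qed
  finally show ?thesis .
qed

lemma count_sigma:
  assumes finS: "finite S" and finD: "\<forall>i\<in>S. finite (D i)"
  shows "card {a\<in>Sigma S D \<rightarrow>\<^sub>E (UNIV::bit set). \<forall>i\<in>S. \<Gamma> i (\<lambda>j\<in>D i. a (i,j)) = z i}
       = (\<Prod>i\<in>S. card {v\<in>D i \<rightarrow>\<^sub>E (UNIV::bit set). \<Gamma> i v = z i})"
proof -
  let ?A = "{a\<in>Sigma S D \<rightarrow>\<^sub>E (UNIV::bit set). \<forall>i\<in>S. \<Gamma> i (\<lambda>j\<in>D i. a (i,j)) = z i}"
  let ?B = "PiE S (\<lambda>i. {v\<in>D i \<rightarrow>\<^sub>E (UNIV::bit set). \<Gamma> i v = z i})"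
  define cur where "cur = (\<lambda>a. \<lambda>i\<in>S. \<lambda>j\<in>D i. a (i,j) :: bit)"
  define unc where "unc = (\<lambda>f. \<lambda>p\<in>Sigma S D. f (fst p) (snd p) :: bit)"
  have "bij_betw cur ?A ?B"
  proof (rule bij_betw_byWitness[where f' = unc])
    show "\<forall>a\<in>?A. unc (cur a) = a"
    proof
      fix a assume a: "a \<in> ?A"
      show "unc (cur a) = a"
      proof (rule ext)
        fix p show "unc (cur a) p = a p"
        proof (cases "p \<in> Sigma S D")
          case True thus ?thesis unfolding unc_def cur_def by (cases p) auto
        next
          case False
          have "a \<in> Sigma S D \<rightarrow>\<^sub>E UNIV" using a by blast
          thus ?thesis using False PiE_arb[of a "Sigma S D" _ p] unfolding unc_def by simp
        qed
      qed
    qed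
    show "\<forall>f\<in>?B. cur (unc f) = f"
    proof
      fix f assume f: "f \<in> ?B"
      show "cur (unc f) = f"
      proof (rule ext)
        fix i show "cur (unc f) i = f i"
        proof (cases "i \<in> S")
          case True
          have fi: "f i \<in> D i \<rightarrow>\<^sub>E UNIV" using f True by (auto simp: PiE_iff)
          have "(\<lambda>j\<in>D i. unc f (i,j)) = f i"
          proof (rule ext)
            fix j show "(\<lambda>j\<in>D i. unc f (i,j)) j = f i j"
            proof (cases "j \<in> D i")
              case True thus ?thesis using \<open>i \<in> S\<close> unfolding unc_def by simp
            next
              case False thus ?thesis using PiE_arb[OF fi False] by simp
            qed
          qed
          thus ?thesis using True unfolding cur_def by simp
        next
          case False
          have "f \<in> PiE S (\<lambda>i. {v\<in>D i \<rightarrow>\<^sub>E (UNIV::bit set). \<Gamma> i v = z i})" using f by blast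
          thus ?thesis using False PiE_arb[of f S _ i] unfolding cur_def by simp
        qed
      qed
    qed
    show "cur ` ?A \<subseteq> ?B"
    proof
      fix f assume "f \<in> cur ` ?A"
      then obtain a where a: "a \<in> ?A" "f = cur a" by blast
      have "\<forall>i\<in>S. cur a i \<in> {v\<in>D i \<rightarrow>\<^sub>E (UNIV::bit set). \<Gamma> i v = z i}"
        using a(1) unfolding cur_def by auto
      moreover have "cur a \<in> extensional S" unfolding cur_def by simp
      ultimately show "f \<in> ?B" using a(2) by (simp add: PiE_iff)
    qed
    show "unc ` ?B \<subseteq> ?A"
    proof
      fix a assume "a \<in> unc ` ?B"
      then obtain f where f: "f \<in> ?B" "a = unc f" by blast
      have ext1: "(\<lambda>j\<in>D i. unc f (i,j)) = f i" if i: "i \<in> S" for i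
      proof (rule ext)
        have fi: "f i \<in> D i \<rightarrow>\<^sub>E UNIV" using f i by (auto simp: PiE_iff)
        fix j show "(\<lambda>j\<in>D i. unc f (i,j)) j = f i j"
        proof (cases "j \<in> D i")
          case True thus ?thesis using i unfolding unc_def by simp
        next
          case False thus ?thesis using PiE_arb[OF fi False] by simp
        qed
      qed
      have "unc f \<in> Sigma S D \<rightarrow>\<^sub>E UNIV" unfolding unc_def by simp
      moreover have "\<forall>i\<in>S. \<Gamma> i (\<lambda>j\<in>D i. unc f (i,j)) = z i"
        using f(1) ext1 by (auto simp: PiE_iff)
      ultimately show "a \<in> ?A" using f(2) by simp
    qed
  qed
  hence "card ?A = card ?B" by (rule bij_betw_same_card)
  also have "card ?B = (\<Prod>i\<in>S. card {v\<in>D i \<rightarrow>\<^sub>E (UNIV::bit set). \<Gamma> i v = z i})"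
    by (rule card_PiE[OF finS])
  finally show ?thesis .
qed


lemma card_bitfun: "finite D \<Longrightarrow> card (D \<rightarrow>\<^sub>E (UNIV::bit set)) = 2 ^ card D"
  by (simp add: card_PiE UNIV_bit numeral_2_eq_2)

lemma finite_bitfun: "finite D \<Longrightarrow> finite (D \<rightarrow>\<^sub>E (UNIV::bit set))"
  by (intro finite_PiE) auto

lemma joint:
  assumes cl: "closed3 m \<Omega>" and fin: "finite \<Omega>" and ne: "\<Omega> \<noteq> {}" and finS: "finite S"
    and rp: "\<forall>i\<in>S. rep m \<Omega> (P i) (D i) (L i) (\<Gamma> i)"
    and fr: "free \<Omega> (Sigma S D) (\<lambda>p. L (fst p) (snd p))"
  shows "real (card {x\<in>\<Omega>. \<forall>i\<in>S. P i x = z i}) / real (card \<Omega>)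
       = (\<Prod>i\<in>S. real (card {v\<in>D i \<rightarrow>\<^sub>E (UNIV::bit set). \<Gamma> i v = z i}) / 2 ^ card (D i))"
proof -
  define G where "G = Sigma S D"
  define LL where "LL = (\<lambda>p. L (fst p) (snd p))"
  define pat where "pat = (\<lambda>x. \<lambda>p\<in>G. LL p x)"
  define \<Phi> where "\<Phi> = (\<lambda>a. \<forall>i\<in>S. \<Gamma> i (\<lambda>j\<in>D i. a (i,j)) = z i)"
  have finD: "\<forall>i\<in>S. finite (D i)" using rp unfolding rep_def by blast
  have finG: "finite G" unfolding G_def using finS finD by auto
  have sub: "\<Omega> \<subseteq> cube m" using cl unfolding closed3_def by blast
  have hG: "\<forall>p\<in>G. h3 m \<Omega> (LL p)"
  proof
    fix p assume "p \<in> G"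
    then obtain i j where p: "p = (i,j)" "i \<in> S" "j \<in> D i" unfolding G_def by blast
    hence "affine_fn m (L i j)" using rp unfolding rep_def by blast
    thus "h3 m \<Omega> (LL p)" unfolding LL_def using p affine_h3[OF _ sub] by simp
  qed
  have e1: "{x\<in>\<Omega>. \<forall>i\<in>S. P i x = z i} = {x\<in>\<Omega>. \<Phi> (pat x)}"
  proof -
    have "P i x = \<Gamma> i (\<lambda>j\<in>D i. pat x (i,j))" if "x \<in> \<Omega>" "i \<in> S" for x i
    proof -
      have "(\<lambda>j\<in>D i. pat x (i,j)) = (\<lambda>j\<in>D i. L i j x)"
        using that unfolding pat_def G_def LL_def by (intro restrict_ext) auto
      thus ?thesis using rp that unfolding rep_def by auto
    qed
    thus ?thesis unfolding \<Phi>_def by auto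
  qed
  have patin: "\<forall>x\<in>\<Omega>. pat x \<in> G \<rightarrow>\<^sub>E (UNIV::bit set)" unfolding pat_def by simp
  have e2: "card {x\<in>\<Omega>. \<Phi> (pat x)} = (\<Sum>a\<in>{a\<in>G \<rightarrow>\<^sub>E (UNIV::bit set). \<Phi> a}. card {x\<in>\<Omega>. pat x = a})"
    by (rule card_fiber_sum[OF fin finite_bitfun[OF finG] patin])
  have e3: "card {x\<in>\<Omega>. pat x = a} * 2 ^ card G = card \<Omega>" if a: "a \<in> G \<rightarrow>\<^sub>E (UNIV::bit set)" for a
  proof -
    have "{x\<in>\<Omega>. pat x = a} = {x\<in>\<Omega>. \<forall>p\<in>G. LL p x = a p}"
      using restrict_eq_iff[OF a] unfolding pat_def by (simp add: restrict_def[symmetric])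
    moreover have "card {x\<in>\<Omega>. \<forall>p\<in>G. LL p x = a p} * 2 ^ card G = card \<Omega>"
      using unif[OF finG cl fin ne hG] fr unfolding G_def LL_def by blast
    ultimately show ?thesis by simp
  qed
  have "card {x\<in>\<Omega>. \<Phi> (pat x)} * 2 ^ card G = (\<Sum>a\<in>{a\<in>G \<rightarrow>\<^sub>E (UNIV::bit set). \<Phi> a}. card {x\<in>\<Omega>. pat x = a} * 2 ^ card G)"
    unfolding e2 by (simp add: sum_distrib_right)
  also have "\<dots> = (\<Sum>a\<in>{a\<in>G \<rightarrow>\<^sub>E (UNIV::bit set). \<Phi> a}. card \<Omega>)"
    by (rule sum.cong[OF refl]) (use e3 in blast)
  also have "\<dots> = card {a\<in>G \<rightarrow>\<^sub>E (UNIV::bit set). \<Phi> a} * card \<Omega>" by simp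
  also have "card {a\<in>G \<rightarrow>\<^sub>E (UNIV::bit set). \<Phi> a} = (\<Prod>i\<in>S. card {v\<in>D i \<rightarrow>\<^sub>E (UNIV::bit set). \<Gamma> i v = z i})"
    unfolding G_def \<Phi>_def by (rule count_sigma[OF finS finD])
  finally have N: "card {x\<in>\<Omega>. \<forall>i\<in>S. P i x = z i} * 2 ^ card G
      = (\<Prod>i\<in>S. card {v\<in>D i \<rightarrow>\<^sub>E (UNIV::bit set). \<Gamma> i v = z i}) * card \<Omega>"
    using e1 by simp
  have pw: "(2::nat) ^ card G = (\<Prod>i\<in>S. 2 ^ card (D i))"
    unfolding G_def using finS finD by (simp add: card_SigmaI power_sum)
  have cpos: "real (card \<Omega>) > 0" using fin ne by (simp add: card_gt_0_iff)
  have "real (card {x\<in>\<Omega>. \<forall>i\<in>S. P i x = z i}) * (\<Prod>i\<in>S. (2::real) ^ card (D i))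
      = (\<Prod>i\<in>S. real (card {v\<in>D i \<rightarrow>\<^sub>E (UNIV::bit set). \<Gamma> i v = z i})) * real (card \<Omega>)"
  proof -
    have "real (card {x\<in>\<Omega>. \<forall>i\<in>S. P i x = z i} * 2 ^ card G)
      = real ((\<Prod>i\<in>S. card {v\<in>D i \<rightarrow>\<^sub>E (UNIV::bit set). \<Gamma> i v = z i}) * card \<Omega>)"
      using N by simp
    thus ?thesis unfolding pw by simp
  qed
  moreover have ppos: "(\<Prod>i\<in>S. (2::real) ^ card (D i)) > 0" by (intro prod_pos) auto
  moreover have "real (card {x\<in>\<Omega>. \<forall>i\<in>S. P i x = z i}) / real (card \<Omega>)
      = (\<Prod>i\<in>S. real (card {v\<in>D i \<rightarrow>\<^sub>E (UNIV::bit set). \<Gamma> i v = z i})) / (\<Prod>i\<in>S. (2::real) ^ card (D i))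
     \<longleftrightarrow> real (card {x\<in>\<Omega>. \<forall>i\<in>S. P i x = z i}) * (\<Prod>i\<in>S. (2::real) ^ card (D i))
      = (\<Prod>i\<in>S. real (card {v\<in>D i \<rightarrow>\<^sub>E (UNIV::bit set). \<Gamma> i v = z i})) * real (card \<Omega>)"
    by (rule frac_eq_eq) (use cpos ppos in auto)
  ultimately have "real (card {x\<in>\<Omega>. \<forall>i\<in>S. P i x = z i}) / real (card \<Omega>)
      = (\<Prod>i\<in>S. real (card {v\<in>D i \<rightarrow>\<^sub>E (UNIV::bit set). \<Gamma> i v = z i})) / (\<Prod>i\<in>S. (2::real) ^ card (D i))"
    by blast
  also have "\<dots> = (\<Prod>i\<in>S. real (card {v\<in>D i \<rightarrow>\<^sub>E (UNIV::bit set). \<Gamma> i v = z i}) / 2 ^ card (D i))"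
    by (rule prod_dividef[symmetric])
  finally show ?thesis .
qed

lemma sqrt_prod: "sqrt (\<Prod>i\<in>S. f i) = (\<Prod>i\<in>S. sqrt (f i))"
proof (induction S rule: infinite_finite_induct)
  case (infinite A) thus ?case by simp
next
  case empty thus ?case by simp
next
  case (insert a A) thus ?case by (simp add: real_sqrt_mult)
qed

lemma case1:
  assumes cl: "closed3 m \<Omega>" and ne: "\<Omega> \<noteq> {}" and S: "S \<subseteq> {0..<n}"
    and rp: "\<forall>i\<in>S. rep m \<Omega> (P i) (D i) (L i) (\<Gamma> i) \<and> card (D i) \<le> s"
    and fr: "free \<Omega> (Sigma S D) (\<lambda>p. L (fst p) (snd p))"
  shows "BC \<Omega> P n \<le> (1 - 1 / (72 * 4 ^ s)) ^ card S"
proof -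
  have fin: "finite \<Omega>" using cl finite_cube finite_subset unfolding closed3_def by blast
  have finS: "finite S" using S finite_subset by blast
  define c where "c = (\<lambda>i b. card {v\<in>D i \<rightarrow>\<^sub>E (UNIV::bit set). \<Gamma> i v = b})"
  define f where "f = (\<lambda>i b. sqrt (real (c i b) / 2 ^ card (D i) * qb b))"
  have rp': "\<forall>i\<in>S. rep m \<Omega> (P i) (D i) (L i) (\<Gamma> i)" using rp by blast
  have "BC \<Omega> P n \<le> (\<Sum>z\<in>S \<rightarrow>\<^sub>E (UNIV::bit set).
      sqrt (real (card {x\<in>\<Omega>. \<forall>i\<in>S. P i x = z i}) / real (card \<Omega>) * (\<Prod>i\<in>S. qb (z i))))"
    by (rule BC_proj[OF fin S])
  also have "\<dots> = (\<Sum>z\<in>S \<rightarrow>\<^sub>E (UNIV::bit set). \<Prod>i\<in>S. f i (z i))"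
  proof (rule sum.cong[OF refl])
    fix z :: "nat \<Rightarrow> bit"
    have "real (card {x\<in>\<Omega>. \<forall>i\<in>S. P i x = z i}) / real (card \<Omega>) * (\<Prod>i\<in>S. qb (z i))
        = (\<Prod>i\<in>S. real (c i (z i)) / 2 ^ card (D i)) * (\<Prod>i\<in>S. qb (z i))"
      unfolding c_def using joint[OF cl fin ne finS rp' fr] by simp
    also have "\<dots> = (\<Prod>i\<in>S. real (c i (z i)) / 2 ^ card (D i) * qb (z i))"
      by (rule prod.distrib[symmetric])
    finally show "sqrt (real (card {x\<in>\<Omega>. \<forall>i\<in>S. P i x = z i}) / real (card \<Omega>) * (\<Prod>i\<in>S. qb (z i)))
        = (\<Prod>i\<in>S. f i (z i))"
      unfolding f_def by (simp add: sqrt_prod)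
  qed
  also have "\<dots> = (\<Prod>i\<in>S. \<Sum>b\<in>(UNIV::bit set). f i b)"
    by (rule prod_sum_PiE[symmetric]) (auto simp: finS)
  also have "\<dots> \<le> (\<Prod>i\<in>S. 1 - 1 / (72 * 4 ^ s))"
  proof (rule prod_mono)
    fix i assume i: "i \<in> S"
    have finDi: "finite (D i)" using rp i unfolding rep_def by blast
    have "c i 0 + c i 1 = 2 ^ card (D i)"
      unfolding c_def using card_split_bit[OF finite_bitfun[OF finDi], of "\<Gamma> i"] card_bitfun[OF finDi] by simp
    hence "sqrt (real (c i 1) / 2 ^ card (D i) * (1/3)) + sqrt (real (c i 0) / 2 ^ card (D i) * (1 - 1/3))
        \<le> 1 - 1 / (72 * 4 ^ s)"
      using coord_bound[of "card (D i)" s "c i 0" "c i 1"] rp i by simp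
    moreover have "(\<Sum>b\<in>(UNIV::bit set). f i b) = sqrt (real (c i 1) / 2 ^ card (D i) * (1/3)) + sqrt (real (c i 0) / 2 ^ card (D i) * (1 - 1/3))"
      unfolding f_def sum_bit qb_def by simp
    moreover have "0 \<le> (\<Sum>b\<in>(UNIV::bit set). f i b)" unfolding f_def by (intro sum_nonneg) (simp add: qb_def)
    ultimately show "0 \<le> (\<Sum>b\<in>(UNIV::bit set). f i b) \<and> (\<Sum>b\<in>(UNIV::bit set). f i b) \<le> 1 - 1 / (72 * 4 ^ s)"
      by simp
  qed
  also have "\<dots> = (1 - 1 / (72 * 4 ^ s)) ^ card S" by simp
  finally show ?thesis .
qed


definition gam :: "nat \<Rightarrow> real" where "gam s = 1 / 2 ^ (8 * (s + 1)^2)"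

lemma nat_ineq: "72 * s * 4 ^ s + 1 \<le> (2::nat) ^ (16 * s + 8)"
proof -
  have s: "s \<le> 2 ^ s" by (simp add: less_imp_le)
  have "(4::nat) ^ s = 2 ^ (2 * s)" by (simp add: power_mult)
  have "72 * s * 4 ^ s + 1 \<le> 72 * 2 ^ s * 4 ^ s + 56 * 2 ^ s * 4 ^ s"
  proof -
    have "72 * s * 4 ^ s \<le> 72 * 2 ^ s * (4::nat) ^ s" using s by simp
    moreover have "1 \<le> 56 * 2 ^ s * (4::nat) ^ s" by simp
    ultimately show ?thesis by linarith
  qed
  also have "\<dots> = 2 ^ 7 * 2 ^ s * 2 ^ (2 * s)" using \<open>4 ^ s = 2 ^ (2 * s)\<close> by simp
  also have "\<dots> = 2 ^ (7 + s + 2 * s)" by (simp only: power_add)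
  also have "\<dots> = 2 ^ (3 * s + 7)" by (rule arg_cong[where f = "\<lambda>k. (2::nat)^k"]) simp
  also have "\<dots> \<le> 2 ^ (16 * s + 8)" by (intro power_increasing) auto
  finally show ?thesis .
qed

lemma gam_step:
  assumes "s \<ge> 1"
  shows "gam s * (72 * real s * 4 ^ s + 1) \<le> gam (s - 1)"
proof -
  obtain t where t: "s = Suc t" using assms by (cases s) auto
  have e: "8 * (s + 1)^2 = 8 * (t + 1)^2 + (16 * s + 8)" unfolding t by (simp add: power2_eq_square algebra_simps)
  have "gam (s - 1) = 1 / 2 ^ (8 * (t + 1)^2)" unfolding gam_def t by simp
  moreover have "gam s = 1 / (2 ^ (8 * (t + 1)^2) * 2 ^ (16 * s + 8))" unfolding gam_def e by (simp add: power_add)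
  moreover have "72 * real s * 4 ^ s + 1 \<le> 2 ^ (16 * s + 8)"
  proof -
    have "real (72 * s * 4 ^ s + 1) \<le> real ((2::nat) ^ (16 * s + 8))" using nat_ineq by (simp only: of_nat_le_iff)
    thus ?thesis by simp
  qed
  ultimately show ?thesis
  proof -
    assume g1: "gam (s - 1) = 1 / 2 ^ (8 * (t + 1)^2)"
      and g2: "gam s = 1 / (2 ^ (8 * (t + 1)^2) * 2 ^ (16 * s + 8))"
      and z: "72 * real s * 4 ^ s + 1 \<le> 2 ^ (16 * s + 8)"
    have g0: "gam s \<ge> 0" unfolding gam_def by simp
    have "gam s * (72 * real s * 4 ^ s + 1) \<le> gam s * 2 ^ (16 * s + 8)" using z g0 by (rule mult_left_mono)
    also have "gam s * 2 ^ (16 * s + 8) = gam (s - 1)" unfolding g1 g2 by simp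
    finally show ?thesis .
  qed
qed

lemma exp_pow_bound:
  fixes \<eta> :: real
  assumes "0 \<le> \<eta>" "\<eta> \<le> 1"
  shows "(1 - \<eta>) ^ k \<le> exp (- \<eta> * real k)"
proof -
  have "1 - \<eta> \<le> exp (- \<eta>)" using exp_ge_add_one_self[of "- \<eta>"] by simp
  hence "(1 - \<eta>) ^ k \<le> exp (- \<eta>) ^ k" using assms by (intro power_mono) auto
  also have "\<dots> = exp (- \<eta> * real k)" by (simp add: exp_of_nat_mult[symmetric] mult.commute)
  finally show ?thesis .
qed

lemma two_pow_exp: "(2::real) ^ k \<le> exp (real k)"
proof -
  have "(2::real) \<le> exp 1" using exp_ge_add_one_self[of 1] by simp
  hence "(2::real) ^ k \<le> exp 1 ^ k" by (intro power_mono) auto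
  thus ?thesis by (simp add: exp_of_nat_mult[symmetric])
qed

lemma rep_subset: "rep m \<Omega> P D L \<Gamma> \<Longrightarrow> \<Omega>' \<subseteq> \<Omega> \<Longrightarrow> rep m \<Omega>' P D L \<Gamma>"
  unfolding rep_def by blast

lemma bit_eq_sum2: "(c::bit) = a + b \<Longrightarrow> b = c + a"
  by (cases a; cases b; cases c; simp)


lemma choose_reps:
  assumes "\<forall>i<n. \<exists>D L \<Gamma>. R i D L \<Gamma>"
  shows "\<exists>DD LL GG. \<forall>i<n. R i (DD i) (LL i) (GG i)"
proof -
  have "\<forall>i. \<exists>t. i < n \<longrightarrow> R i (fst t) (fst (snd t)) (snd (snd t))"
    using assms by fastforce
  then obtain f where f: "\<forall>i. i < n \<longrightarrow> R i (fst (f i)) (fst (snd (f i))) (snd (snd (f i)))"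
    by metis
  show ?thesis
    by (rule exI[of _ "\<lambda>i. fst (f i)"], rule exI[of _ "\<lambda>i. fst (snd (f i))"], rule exI[of _ "\<lambda>i. snd (snd (f i))"]) (use f in blast)
qed

lemma main_step:
  assumes IH: "s > 0 \<Longrightarrow> (\<forall>\<Omega>. closed3 m \<Omega> \<longrightarrow> (\<forall>i<n. \<exists>D L \<Gamma>. rep m \<Omega> (P i) D L \<Gamma> \<and> card D \<le> s - 1)
        \<longrightarrow> BC \<Omega> P n \<le> exp (- real n * gam (s - 1)))"
    and cl: "closed3 m \<Omega>" and reps: "\<forall>i<n. \<exists>D L \<Gamma>. rep m \<Omega> (P i) D L \<Gamma> \<and> card D \<le> s"
  shows "BC \<Omega> P n \<le> exp (- real n * gam s)"
proof (cases "\<Omega> = {}")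
  case True thus ?thesis by (simp add: BC_empty)
next
  case ne: False
  have fin: "finite \<Omega>" using cl finite_cube finite_subset unfolding closed3_def by blast
  have sub: "\<Omega> \<subseteq> cube m" using cl unfolding closed3_def by blast
  have "\<forall>i<n. \<exists>D L \<Gamma>. rep m \<Omega> (P i) D L \<Gamma> \<and> card D \<le> s \<and> free \<Omega> D L"
  proof (intro allI impI)
    fix i assume "i < n"
    then obtain D L \<Gamma> where r: "rep m \<Omega> (P i) D L \<Gamma>" "card D \<le> s" using reps by blast
    obtain D' \<Gamma>' where r': "D' \<subseteq> D" "rep m \<Omega> (P i) D' L \<Gamma>'" "free \<Omega> D' L"
      using rep_free[OF r(1)] by blast
    have "card D' \<le> card D" using r'(1) r(1) unfolding rep_def by (intro card_mono) auto
    hence "card D' \<le> s" using r(2) by linarith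
    thus "\<exists>D L \<Gamma>. rep m \<Omega> (P i) D L \<Gamma> \<and> card D \<le> s \<and> free \<Omega> D L" using r'(2,3) by blast
  qed
  then obtain DD LL GG where H: "\<forall>i<n. rep m \<Omega> (P i) (DD i) (LL i) (GG i) \<and> card (DD i) \<le> s \<and> free \<Omega> (DD i) (LL i)"
    using choose_reps[of n "\<lambda>i D L \<Gamma>. rep m \<Omega> (P i) D L \<Gamma> \<and> card D \<le> s \<and> free \<Omega> D L"] by blast
  define LLL where "LLL = (\<lambda>p. LL (fst p) (snd p))"
  define Fam where "Fam = {S. S \<subseteq> {0..<n} \<and> free \<Omega> (Sigma S DD) LLL}"
  have finFam: "finite Fam" unfolding Fam_def by (rule finite_subset[of _ "Pow {0..<n}"]) auto
  have emp: "{} \<in> Fam" unfolding Fam_def free_def by auto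
  define k where "k = Max (card ` Fam)"
  have "k \<in> card ` Fam" unfolding k_def using finFam emp by (intro Max_in) auto
  then obtain S where S: "S \<in> Fam" "card S = k" by blast
  have maxS: "card S' \<le> card S" if "S' \<in> Fam" for S'
  proof -
    have "card S' \<le> Max (card ` Fam)" using that finFam by (intro Max_ge) auto
    thus ?thesis using S(2) unfolding k_def by simp
  qed
  have Ssub: "S \<subseteq> {0..<n}" and frS: "free \<Omega> (Sigma S DD) LLL" using S(1) unfolding Fam_def by auto
  have finS: "finite S" using Ssub finite_subset by blast
  have notfree: "\<not> free \<Omega> (Sigma (insert i S) DD) LLL" if i: "i < n" "i \<notin> S" for i
  proof
    assume "free \<Omega> (Sigma (insert i S) DD) LLL"
    hence "insert i S \<in> Fam" unfolding Fam_def using Ssub i by auto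
    hence "card (insert i S) \<le> card S" by (rule maxS)
    thus False using i finS by simp
  qed
  define \<eta> where "\<eta> = 1 / (72 * 4 ^ s :: real)"
  have p4: "(1::real) \<le> 4 ^ s" by simp
  have p4': "(1::real) \<le> 72 * 4 ^ s" using p4 by linarith
  have e1: "0 \<le> \<eta>" "\<eta> > 0" unfolding \<eta>_def by simp_all
  have e2: "\<eta> \<le> 1" unfolding \<eta>_def using p4' by simp
  note eta = e1(1) e2 e1(2)
  show ?thesis
  proof (cases "real (card S) \<ge> real n * gam s * (72 * 4 ^ s)")
    case True
    have rpS: "\<forall>i\<in>S. rep m \<Omega> (P i) (DD i) (LL i) (GG i) \<and> card (DD i) \<le> s" using H Ssub by auto
    have "BC \<Omega> P n \<le> (1 - \<eta>) ^ card S"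
      unfolding \<eta>_def using case1[OF cl ne Ssub rpS] frS unfolding LLL_def by blast
    also have "\<dots> \<le> exp (- \<eta> * real (card S))" by (rule exp_pow_bound[OF eta(1,2)])
    also have "\<dots> \<le> exp (- real n * gam s)"
    proof -
      have "real n * gam s \<le> \<eta> * real (card S)"
        using True unfolding \<eta>_def by (simp add: field_simps)
      thus ?thesis by simp
    qed
    finally show ?thesis .
  next
    case False
    hence small: "real (card S) < real n * gam s * (72 * 4 ^ s)" by simp
    have spos: "s > 0"
    proof (rule ccontr)
      assume "\<not> s > 0"
      hence s0: "s = 0" by simp
      have "\<forall>i<n. DD i = {}"
      proof (intro allI impI)
        fix i assume "i < n"
        hence "card (DD i) = 0" "finite (DD i)" using H s0 unfolding rep_def by auto
        thus "DD i = {}" by simp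
      qed
      hence "Sigma {0..<n} DD = {}" by auto
      hence "{0..<n} \<in> Fam" unfolding Fam_def free_def by auto
      hence "n \<le> card S" using maxS by fastforce
      moreover have "real n * gam s * (72 * 4 ^ s) \<le> real n" using s0 unfolding gam_def by simp
      ultimately show False using small by linarith
    qed
    define G where "G = Sigma S DD"
    define pat where "pat = (\<lambda>x. \<lambda>p\<in>G. LLL p x)"
    define A where "A = G \<rightarrow>\<^sub>E (UNIV :: bit set)"
    have finD: "\<forall>i\<in>S. finite (DD i)" using H Ssub unfolding rep_def by auto
    have finG: "finite G" unfolding G_def using finS finD by auto
    have finA: "finite A" unfolding A_def by (rule finite_bitfun[OF finG])
    have patA: "\<forall>x\<in>\<Omega>. pat x \<in> A" unfolding pat_def A_def by simp
    have hG: "\<forall>p\<in>G. h3 m \<Omega> (LLL p)"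
    proof
      fix p assume "p \<in> G"
      then obtain i j where p: "p = (i,j)" "i \<in> S" "j \<in> DD i" unfolding G_def by blast
      hence "affine_fn m (LL i j)" using H Ssub unfolding rep_def by auto
      thus "h3 m \<Omega> (LLL p)" unfolding LLL_def using p affine_h3[OF _ sub] by simp
    qed
    have BCa: "BC {x\<in>\<Omega>. pat x = a} P n \<le> exp (- real n * gam (s - 1))" if a: "a \<in> A" for a
    proof -
      define \<Omega>a where "\<Omega>a = {x\<in>\<Omega>. pat x = a}"
      have a': "a \<in> G \<rightarrow>\<^sub>E (UNIV::bit set)" using a unfolding A_def .
      have Oa: "\<Omega>a = {x\<in>\<Omega>. \<forall>p\<in>G. LLL p x = a p}"
        unfolding \<Omega>a_def pat_def using restrict_eq_iff[OF a'] by auto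
      have cla: "closed3 m \<Omega>a" unfolding Oa by (rule closed3_fiber[OF cl hG])
      have subA: "\<Omega>a \<subseteq> \<Omega>" unfolding \<Omega>a_def by blast
      have repa: "\<forall>i<n. \<exists>D L \<Gamma>. rep m \<Omega>a (P i) D L \<Gamma> \<and> card D \<le> s - 1"
      proof (intro allI impI)
        fix i assume i: "i < n"
        have ri: "rep m \<Omega> (P i) (DD i) (LL i) (GG i)" "card (DD i) \<le> s" using H i by auto
        show "\<exists>D L \<Gamma>. rep m \<Omega>a (P i) D L \<Gamma> \<and> card D \<le> s - 1"
        proof (cases "i \<in> S")
          case True
          have "\<forall>x\<in>\<Omega>a. P i x = (\<lambda>_. GG i (\<lambda>j\<in>DD i. a (i,j))) (\<lambda>j\<in>{}. LL i j x)"
          proof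
            fix x assume x: "x \<in> \<Omega>a"
            have "(\<lambda>j\<in>DD i. LL i j x) = (\<lambda>j\<in>DD i. a (i,j))"
            proof (rule restrict_ext)
              fix j assume "j \<in> DD i"
              hence "(i,j) \<in> G" unfolding G_def using True by blast
              thus "LL i j x = a (i,j)" using x unfolding Oa LLL_def by auto
            qed
            thus "P i x = (\<lambda>_. GG i (\<lambda>j\<in>DD i. a (i,j))) (\<lambda>j\<in>{}. LL i j x)"
              using ri(1) x subA unfolding rep_def by auto
          qed
          hence "rep m \<Omega>a (P i) {} (LL i) (\<lambda>_. GG i (\<lambda>j\<in>DD i. a (i,j)))" unfolding rep_def by simp
          thus ?thesis by fastforce
        next
          case False
          obtain T c where T: "T \<subseteq> Sigma (insert i S) DD" "T \<noteq> {}" "\<forall>x\<in>\<Omega>. (\<Sum>p\<in>T. LLL p x) = c"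
            using notfree[OF i False] unfolding free_def by blast
          define T0 where "T0 = T \<inter> G"
          define T1 where "T1 = {j. (i,j) \<in> T}"
          have T1D: "T1 \<subseteq> DD i" unfolding T1_def using T(1) False by auto
          have finDi: "finite (DD i)" using ri unfolding rep_def by blast
          have finT1: "finite T1" using T1D finDi finite_subset by blast
          have finT0: "finite T0" unfolding T0_def using finG by simp
          have Tsplit: "T = T0 \<union> Pair i ` T1" unfolding T0_def T1_def G_def using T(1) by auto
          have disj: "T0 \<inter> Pair i ` T1 = {}" unfolding T0_def G_def using False by auto
          have sumsplit: "(\<Sum>p\<in>T. LLL p x) = (\<Sum>p\<in>T0. LLL p x) + (\<Sum>j\<in>T1. LL i j x)" for x
          proof -
            have "(\<Sum>p\<in>T. LLL p x) = (\<Sum>p\<in>T0. LLL p x) + (\<Sum>p\<in>Pair i ` T1. LLL p x)"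
              unfolding Tsplit using finT0 finT1 disj by (intro sum.union_disjoint) auto
            also have "(\<Sum>p\<in>Pair i ` T1. LLL p x) = (\<Sum>j\<in>T1. LL i j x)"
              by (subst sum.reindex) (auto simp: inj_on_def LLL_def)
            finally show ?thesis .
          qed
          have T1ne: "T1 \<noteq> {}"
          proof
            assume "T1 = {}"
            hence "T = T0" using Tsplit by simp
            hence "T \<subseteq> G" unfolding T0_def by blast
            thus False using frS T(2,3) unfolding free_def G_def by blast
          qed
          have "\<forall>x\<in>\<Omega>a. (\<Sum>j\<in>T1. LL i j x) = c + (\<Sum>p\<in>T0. a p)"
          proof
            fix x assume x: "x \<in> \<Omega>a"
            have "(\<Sum>p\<in>T0. LLL p x) = (\<Sum>p\<in>T0. a p)"
              by (rule sum.cong[OF refl]) (use x in \<open>auto simp: Oa T0_def\<close>)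
            moreover have "c = (\<Sum>p\<in>T0. LLL p x) + (\<Sum>j\<in>T1. LL i j x)"
              using T(3) x subA sumsplit by auto
            ultimately show "(\<Sum>j\<in>T1. LL i j x) = c + (\<Sum>p\<in>T0. a p)"
              using bit_eq_sum2 by metis
          qed
          moreover have "rep m \<Omega>a (P i) (DD i) (LL i) (GG i)" using rep_subset[OF ri(1) subA] .
          ultimately obtain D' \<Gamma>' where "D' \<subseteq> DD i" "card D' < card (DD i)" "rep m \<Omega>a (P i) D' (LL i) \<Gamma>'"
            using rep_drop[of m \<Omega>a "P i" "DD i" "LL i" "GG i" T1] T1D T1ne by blast
          moreover have "card D' \<le> s - 1" using calculation(2) ri(2) by linarith
          ultimately show ?thesis by blast
        qed
      qed
      show ?thesis using IH[OF spos] cla repa unfolding \<Omega>a_def by blast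
    qed
    have "BC \<Omega> P n \<le> (\<Sum>a\<in>A. BC {x\<in>\<Omega>. pat x = a} P n)" by (rule BC_mix[OF fin finA patA])
    also have "\<dots> \<le> (\<Sum>a\<in>A. exp (- real n * gam (s - 1)))" by (intro sum_mono BCa)
    also have "\<dots> = 2 ^ card G * exp (- real n * gam (s - 1))"
      unfolding A_def using card_bitfun[OF finG] by simp
    also have "\<dots> \<le> exp (- real n * gam s)"
    proof -
      have cG: "card G \<le> s * card S"
      proof -
        have "card G = (\<Sum>i\<in>S. card (DD i))" unfolding G_def using finS finD by (simp add: card_SigmaI)
        also have "\<dots> \<le> (\<Sum>i\<in>S. s)" using H Ssub by (intro sum_mono) auto
        finally show ?thesis by (simp add: mult.commute)
      qed
      have "real (card G) \<le> real s * real (card S)" using cG by (metis of_nat_le_iff of_nat_mult)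
      also have "\<dots> \<le> real s * (real n * gam s * (72 * 4 ^ s))" using small by (intro mult_left_mono) auto
      finally have cG': "real (card G) \<le> real n * (gam s * (72 * real s * 4 ^ s))" by (simp add: ac_simps)
      have gs: "gam s * (72 * real s * 4 ^ s) + gam s \<le> gam (s - 1)"
        using gam_step[of s] spos by (simp add: algebra_simps)
      have "(2::real) ^ card G * exp (- real n * gam (s - 1)) \<le> exp (real (card G)) * exp (- real n * gam (s - 1))"
        by (intro mult_right_mono two_pow_exp) auto
      also have "\<dots> = exp (real (card G) - real n * gam (s - 1))" by (simp add: exp_add[symmetric])
      also have "\<dots> \<le> exp (- real n * gam s)"
      proof -
        have "real n * (gam s * (72 * real s * 4 ^ s)) + real n * gam s \<le> real n * gam (s - 1)"
          using gs by (metis distrib_left mult_left_mono of_nat_0_le_iff)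
        thus ?thesis using cG' by simp
      qed
      finally show ?thesis .
    qed
    finally show ?thesis .
  qed
qed

lemma main:
  "\<forall>\<Omega>. closed3 m \<Omega> \<longrightarrow> (\<forall>i<n. \<exists>D L \<Gamma>. rep m \<Omega> (P i) D L \<Gamma> \<and> card D \<le> s) \<longrightarrow> BC \<Omega> P n \<le> exp (- real n * gam s)"
proof (induction s)
  case 0
  show ?case using main_step[of 0] by blast
next
  case (Suc s)
  show ?case using main_step[of "Suc s"] Suc by simp
qed


lemma abs_ge_sqrt:
  fixes a b :: real
  assumes "0 \<le> a" "0 \<le> b"
  shows "a + b - 2 * sqrt (a * b) \<le> \<bar>a - b\<bar>"
proof (cases "a \<le> b")
  case True
  have "sqrt (a * a) \<le> sqrt (a * b)" using True assms by (intro real_sqrt_le_mono mult_left_mono) auto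
  hence "a \<le> sqrt (a * b)" using assms by simp
  thus ?thesis using True by linarith
next
  case False
  have "sqrt (b * b) \<le> sqrt (a * b)" using False assms by (intro real_sqrt_le_mono mult_right_mono) auto
  hence "b \<le> sqrt (a * b)" using assms by simp
  thus ?thesis using False by linarith
qed

lemma card_cube: "card (cube m) = 2 ^ m"
  unfolding cube_def using card_bitfun[of "{0..<m}"] by simp

lemma TV_BC: "tv_dist n (push_dist m n P) (ber_prod (1/3) n) \<ge> 1 - BC (cube m) P n"
proof -
  let ?a = "push_dist m n P"
  let ?b = "ber_prod (1/3) n"
  have a_eq: "?a y = real (cnt (cube m) P n y) / real (card (cube m))" for y
    unfolding push_dist_def cnt_def card_cube by simp
  have anonneg: "?a y \<ge> 0" for y unfolding push_dist_def by simp
  have BCeq: "BC (cube m) P n = (\<Sum>y\<in>cube n. sqrt (?a y * ?b y))"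
    unfolding BC_def a_eq by simp
  have sumA: "(\<Sum>y\<in>cube n. ?a y) = 1"
  proof -
    have "card {x\<in>cube m. True} = (\<Sum>y\<in>{y\<in>cube n. True}. card {x\<in>cube m. (\<lambda>i\<in>{0..<n}. P i x) = y})"
      by (rule card_fiber_sum[OF finite_cube finite_cube]) (intro ballI pat_cube)
    hence "real (card (cube m)) = (\<Sum>y\<in>cube n. real (cnt (cube m) P n y))" unfolding cnt_def by simp
    moreover have "real (card (cube m)) > 0" unfolding card_cube by simp
    ultimately show ?thesis unfolding a_eq by (simp add: sum_divide_distrib[symmetric])
  qed
  have sumB: "(\<Sum>y\<in>cube n. ?b y) = 1"
  proof -
    have "(\<Sum>y\<in>cube n. ?b y) = (\<Sum>y\<in>PiE {0..<n} (\<lambda>_. UNIV). \<Prod>i\<in>{0..<n}. qb (y i))"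
      unfolding cube_def by (simp add: ber_qb)
    also have "\<dots> = (\<Prod>i\<in>{0..<n}. \<Sum>b\<in>(UNIV::bit set). qb b)"
      by (rule prod_sum_PiE[symmetric]) auto
    also have "\<dots> = 1" by (simp add: sum_bit qb_def)
    finally show ?thesis .
  qed
  have "(\<Sum>y\<in>cube n. ?a y + ?b y - 2 * sqrt (?a y * ?b y)) \<le> (\<Sum>y\<in>cube n. \<bar>?a y - ?b y\<bar>)"
    by (intro sum_mono abs_ge_sqrt anonneg ber_nonneg)
  moreover have "(\<Sum>y\<in>cube n. ?a y + ?b y - 2 * sqrt (?a y * ?b y)) = 2 - 2 * BC (cube m) P n"
    unfolding BCeq using sumA sumB by (simp add: sum.distrib sum_subtractf sum_distrib_left)
  ultimately show ?thesis unfolding tv_dist_def by simp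
qed

lemma if_mult_bit: "(if c then 1 else 0) * (y::bit) = (if c then y else 0)"
  by (cases c) simp_all

lemma sum_delta_bit0:
  assumes j: "j < (m::nat)" shows "(\<Sum>i<m. if i = j then x i else (0::bit)) = x j"
proof -
  have "(\<Sum>i<m. if i = j then x i else (0::bit)) = (if j = j then x j else 0) + (\<Sum>i\<in>{..<m}-{j}. if i = j then x i else (0::bit))"
    by (rule sum.remove) (use j in auto)
  also have "(\<Sum>i\<in>{..<m}-{j}. if i = j then x i else (0::bit)) = 0" by (rule sum.neutral) auto
  finally show ?thesis by simp
qed

lemma sum_delta_bit: "j < (m::nat) \<Longrightarrow> (\<Sum>i<m. (if i = j then 1 else 0) * (x i :: bit)) = x j"
proof -
  assume j: "j < m"
  have "(\<Sum>i<m. (if i = j then 1 else 0) * x i) = (\<Sum>i<m. if i = j then x i else 0)"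
    by (intro sum.cong refl) (rule if_mult_bit)
  also have "\<dots> = x j" using j by (rule sum_delta_bit0)
  finally show ?thesis .
qed

lemma rank_rep: "\<exists>D L \<Gamma>. rep m (cube m) Q D L \<Gamma> \<and> card D = rank1 m Q"
proof -
  let ?R = "\<lambda>k. 0 < k \<and> (\<exists>(L :: nat \<Rightarrow> (nat \<Rightarrow> bit) \<Rightarrow> bit) (\<Gamma> :: (nat \<Rightarrow> bit) \<Rightarrow> bit).
        (\<forall>j<k. affine_fn m (L j)) \<and> (\<forall>x \<in> cube m. Q x = \<Gamma> (\<lambda>j\<in>{0..<k}. L j x)))"
  define L0 where "L0 = (\<lambda>j (x :: nat \<Rightarrow> bit). if j < m then x j else 0)"
  define G0 where "G0 = (\<lambda>v :: nat \<Rightarrow> bit. Q (\<lambda>i\<in>{0..<m}. v i))"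
  have aff: "affine_fn m (L0 j)" for j
  proof (cases "j < m")
    case True
    have h: "\<forall>x\<in>cube m. L0 j x = 0 + (\<Sum>i<m. (\<lambda>i. if i = j then 1 else 0) i * x i)"
    proof
      fix x :: "nat \<Rightarrow> bit"
      have "(\<Sum>i<m. (\<lambda>i. if i = j then 1 else 0) i * x i) = x j" using sum_delta_bit[OF True, of x] by simp
      moreover have "L0 j x = x j" unfolding L0_def using True by simp
      ultimately show "L0 j x = 0 + (\<Sum>i<m. (\<lambda>i. if i = j then 1 else 0) i * x i)" by simp
    qed
    show ?thesis unfolding affine_fn_def by (rule exI[of _ "\<lambda>i. if i = j then 1 else 0"], rule exI[of _ 0]) (rule h)
  next
    case False
    have h: "\<forall>x\<in>cube m. L0 j x = 0 + (\<Sum>i<m. (\<lambda>_. 0) i * x i)" using False unfolding L0_def by simp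
    show ?thesis unfolding affine_fn_def by (rule exI[of _ "\<lambda>_. 0"], rule exI[of _ 0]) (rule h)
  qed
  have "?R (Suc m)"
  proof -
    have "\<forall>x \<in> cube m. Q x = G0 (\<lambda>j\<in>{0..<Suc m}. L0 j x)"
    proof
      fix x assume x: "x \<in> cube m"
      have "(\<lambda>i\<in>{0..<m}. (\<lambda>j\<in>{0..<Suc m}. L0 j x) i) = restrict x {0..<m}"
      proof (rule restrict_ext)
        fix i assume "i \<in> {0..<m}"
        thus "(\<lambda>j\<in>{0..<Suc m}. L0 j x) i = x i" unfolding L0_def by simp
      qed
      also have "\<dots> = x" using x unfolding cube_def by (rule PiE_restrict)
      finally have eq: "(\<lambda>i\<in>{0..<m}. (\<lambda>j\<in>{0..<Suc m}. L0 j x) i) = x" .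
      show "Q x = G0 (\<lambda>j\<in>{0..<Suc m}. L0 j x)" unfolding G0_def eq by (rule refl)
    qed
    moreover have "\<forall>j<Suc m. affine_fn m (L0 j)" using aff by simp
    ultimately have c: "(\<forall>j<Suc m. affine_fn m (L0 j)) \<and> (\<forall>x\<in>cube m. Q x = G0 (\<lambda>j\<in>{0..<Suc m}. L0 j x))"
      by (rule conjI[rotated])
    show ?thesis by (rule conjI, simp, rule exI[of _ L0], rule exI[of _ G0], rule c)
  qed
  hence R: "?R (rank1 m Q)" unfolding rank1_def by (rule LeastI)
  then obtain L \<Gamma> where LG: "\<forall>j<rank1 m Q. affine_fn m (L j)"
    "\<forall>x \<in> cube m. Q x = \<Gamma> (\<lambda>j\<in>{0..<rank1 m Q}. L j x)" by blast
  have "rep m (cube m) Q {0..<rank1 m Q} L \<Gamma>" unfolding rep_def using LG by auto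
  thus ?thesis by fastforce
qed


lemma numfinal:
  fixes r :: real and n s :: nat
  assumes r1: "1 \<le> r" and rc: "r \<le> 1/8 * sqrt (log 2 (real n))" and s: "real s \<le> r"
  shows "exp (- real n * gam s) \<le> 1 * 2 powr (r / 2) / real n powr (1 / (r + 1))"
proof -
  define L where "L = log 2 (real n)"
  have L8: "8 * r \<le> sqrt L" using rc unfolding L_def by simp
  hence "0 < sqrt L" using r1 by linarith
  hence Lpos: "0 < L" by simp
  have n0: "n \<noteq> 0"
  proof
    assume "n = 0"
    hence "L = 0" unfolding L_def by (simp add: log_def)
    thus False using Lpos by simp
  qed
  hence npos: "real n > 0" by simp
  have n1: "1 < real n" using Lpos npos unfolding L_def by simp
  have "(8 * r)^2 \<le> (sqrt L)^2" using L8 r1 by (intro power_mono) auto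
  hence L64: "64 * r^2 \<le> L" using Lpos by (simp add: power_mult_distrib)
  have "(real s + 1)^2 \<le> (2 * r)^2" using s r1 by (intro power_mono) auto
  hence "16 * (real s + 1)^2 \<le> 64 * r^2" by (simp add: power_mult_distrib)
  hence E: "16 * (real s + 1)^2 \<le> L" using L64 by linarith
  define K where "K = 8 * (s + 1)^2"
  have rK: "real (2 * K) = 16 * (real s + 1)^2" unfolding K_def by simp
  have "(2::real) ^ (2 * K) = 2 powr (real (2 * K))" by (rule powr_realpow[symmetric]) simp
  also have "\<dots> \<le> 2 powr L" using E rK by simp
  also have "\<dots> = real n" unfolding L_def using npos by simp
  finally have "((2::real) ^ K)^2 \<le> real n" by (simp add: power_mult[symmetric] mult.commute)
  hence sK: "(2::real) ^ K \<le> sqrt (real n)" by (simp add: real_le_rsqrt)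
  have gs: "gam s = 1 / 2 ^ K" unfolding gam_def K_def by simp
  have sqn: "sqrt (real n) > 0" using npos by simp
  have "real n * gam s = real n / 2 ^ K" unfolding gs by simp
  also have "\<dots> \<ge> real n / sqrt (real n)" using sK sqn npos by (intro divide_left_mono) auto
  also have "real n / sqrt (real n) = sqrt (real n)"
    using npos by (metis real_div_sqrt less_imp_le)
  finally have xge: "real n * gam s \<ge> sqrt (real n)" .
  define x where "x = real n * gam s"
  have xpos: "x > 0" using xge sqn unfolding x_def by linarith
  have "exp x \<ge> x" using exp_ge_add_one_self[of x] by linarith
  hence "exp (- x) \<le> 1 / x" using xpos by (simp add: exp_minus field_simps)
  also have "\<dots> \<le> 1 / sqrt (real n)" using xge sqn unfolding x_def by (intro frac_le) auto
  finally have e1: "exp (- real n * gam s) \<le> 1 / sqrt (real n)" unfolding x_def by simp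
  have "real n powr (1 / (r + 1)) \<le> real n powr (1/2)"
    using r1 n1 by (intro powr_mono) (auto simp: field_simps)
  also have "\<dots> = sqrt (real n)" using npos by (simp add: powr_half_sqrt)
  finally have p1: "real n powr (1 / (r + 1)) \<le> sqrt (real n)" .
  have ppos: "real n powr (1 / (r + 1)) > 0" using npos by simp
  have p2: "1 \<le> (2::real) powr (r / 2)" using r1 by (intro ge_one_powr_ge_zero) auto
  have "1 / sqrt (real n) \<le> 1 / real n powr (1 / (r + 1))"
    using p1 ppos by (intro divide_left_mono) auto
  also have "\<dots> \<le> 2 powr (r / 2) / real n powr (1 / (r + 1))"
    using p2 ppos by (intro divide_right_mono) auto
  finally show ?thesis using e1 by simp
qed

lemma final_bound:
  fixes n m :: nat and r :: real and P :: "nat \<Rightarrow> (nat \<Rightarrow> bit) \<Rightarrow> bit"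
  assumes r1: "1 \<le> r" and rc: "r \<le> 1/8 * sqrt (log 2 (real n))"
    and rk: "\<forall>i<n. real (rank1 m (P i)) \<le> r"
  shows "tv_dist n (push_dist m n P) (ber_prod (1/3) n) \<ge> 1 - 1 * 2 powr (r / 2) / real n powr (1 / (r + 1))"
proof -
  define s where "s = nat \<lfloor>r\<rfloor>"
  have sr: "real s \<le> r" unfolding s_def using r1 by linarith
  have reps: "\<forall>i<n. \<exists>D L \<Gamma>. rep m (cube m) (P i) D L \<Gamma> \<and> card D \<le> s"
  proof (intro allI impI)
    fix i assume i: "i < n"
    obtain D L \<Gamma> where r: "rep m (cube m) (P i) D L \<Gamma>" "card D = rank1 m (P i)"
      using rank_rep by blast
    have "rank1 m (P i) \<le> s" unfolding s_def using rk i by (intro le_nat_floor) auto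
    hence "card D \<le> s" using r(2) by simp
    thus "\<exists>D L \<Gamma>. rep m (cube m) (P i) D L \<Gamma> \<and> card D \<le> s" using r(1) by blast
  qed
  have "BC (cube m) P n \<le> exp (- real n * gam s)"
    using main[where m=m and n=n and P=P and s=s] closed3_cube reps by blast
  also have "\<dots> \<le> 1 * 2 powr (r / 2) / real n powr (1 / (r + 1))"
    by (rule numfinal[OF r1 rc sr])
  finally have "BC (cube m) P n \<le> 1 * 2 powr (r / 2) / real n powr (1 / (r + 1))" .
  thus ?thesis using TV_BC[where n=n and m=m and P=P] by linarith
qed

theorem theorem8p6:
  "\<exists>c C :: real. c > 0 \<and> C > 0 \<and>
     (\<forall>(n :: nat) (m :: nat) (r :: real) (P :: nat \<Rightarrow> (nat \<Rightarrow> bit) \<Rightarrow> bit).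
        1 \<le> r \<longrightarrow> r \<le> c * sqrt (log 2 (real n)) \<longrightarrow>
        (\<forall>i<n. real (rank1 m (P i)) \<le> r) \<longrightarrow>
        tv_dist n (push_dist m n P) (ber_prod (1/3) n)
          \<ge> 1 - C * 2 powr (r / 2) / real n powr (1 / (r + 1)))"
proof -
  have H: "\<forall>(n :: nat) (m :: nat) (r :: real) (P :: nat \<Rightarrow> (nat \<Rightarrow> bit) \<Rightarrow> bit).
        1 \<le> r \<longrightarrow> r \<le> 1/8 * sqrt (log 2 (real n)) \<longrightarrow>
        (\<forall>i<n. real (rank1 m (P i)) \<le> r) \<longrightarrow>
        tv_dist n (push_dist m n P) (ber_prod (1/3) n)
          \<ge> 1 - 1 * 2 powr (r / 2) / real n powr (1 / (r + 1))"
    using final_bound by blast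
  show ?thesis
    by (rule exI[of _ "1/8"], rule exI[of _ 1], intro conjI) (simp, simp, rule H)
qed


end
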